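(* Let $(X_t, t\ge 0)$ be a zero-mean Gaussian process with $X_0=0$ and covariance function $R(s,t)=E(X_sX_t)$. Assume that $R$ is continuous, that the partial derivative $\frac{\partial R}{\partial s}(s,t)$ exists in the region $\{(s,t): s>0,\ t>0,\ s\neq t\}$, and that for every $T>0$, $$\sup_{t\in[0,T]}\int_0^T\Big|\frac{\partial R}{\partial s}(s,t)\Big|\,ds<\infty.$$ Fix $\lambda>0$, set $V_t=R(t,t)$, $M_t=\exp(\lambda X_t-\tfrac12\lambda^2V_t)$ and $\delta_tM=\frac1\lambda(M_t-1)$. Then for any $t>0$, any $n\ge1$, any times $t_1,\dots,t_n>0$ and any $f\in C_b^\infty(\mathbb{R}^n)$, the random variable $F=f(X_{t_1},\dots,X_{t_n})$ satisfies $$E(F\,\delta_tM)=E\Big(\sum_{i=1}^n\frac{\partial f}{\partial x_i}(X_{t_1},\dots,X_{t_n})\int_0^tM_s\,\frac{\partial R}{\partial s}(s,t_i)\,ds\Big).$$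
   Context: $C_b^\infty(\mathbb{R}^n)$ denotes the smooth functions on $\mathbb{R}^n$ which are bounded together with all their partial derivatives. $\frac{\partial R}{\partial s}(s,t)$ denotes the partial derivative of $R$ with respect to its first argument. *)

theory Defs
  imports "HOL-Probability.Probability"
begin

definition centered_gaussian_rv :: "'a measure \<Rightarrow> ('a \<Rightarrow> real) \<Rightarrow> bool" where
  "centered_gaussian_rv M Y \<longleftrightarrow>
     Y \<in> borel_measurable M \<and>
     ((AE \<omega> in M. Y \<omega> = 0) \<or> (\<exists>\<sigma>>0. distributed M lborel Y (normal_density 0 \<sigma>)))"

definition centered_gaussian_process :: "'a measure \<Rightarrow> real set \<Rightarrow> (real \<Rightarrow> 'a \<Rightarrow> real) \<Rightarrow> bool" where
  "centered_gaussian_process M I X \<longleftrightarrow>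
     (\<forall>t\<in>I. X t \<in> borel_measurable M) \<and>
     (\<forall>F c. finite F \<longrightarrow> F \<subseteq> I \<longrightarrow>
        centered_gaussian_rv M (\<lambda>\<omega>. \<Sum>t\<in>F. c t * X t \<omega>))"

definition pd :: "'n::finite \<Rightarrow> (real^'n \<Rightarrow> real) \<Rightarrow> real^'n \<Rightarrow> real" where
  "pd i g x = deriv (\<lambda>h. g (x + h *\<^sub>R axis i 1)) 0"

inductive_set iterated_partials :: "(real^'n::finite \<Rightarrow> real) \<Rightarrow> (real^'n \<Rightarrow> real) set"
  for f where
    base: "f \<in> iterated_partials f"
  | step: "g \<in> iterated_partials f \<Longrightarrow> pd i g \<in> iterated_partials f"

definition Cb_inf :: "(real^'n::finite \<Rightarrow> real) \<Rightarrow> bool" where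
  "Cb_inf f \<longleftrightarrow> (\<forall>g\<in>iterated_partials f. (\<forall>x. g differentiable (at x)) \<and> bounded (range g))"

end

theory Submission
  imports Defs "HOL-Probability.Probability"
begin


lemma pow_le_fact_exp:
  fixes y :: real assumes "0 \<le> y"
  shows "y ^ m \<le> fact m * exp y"
proof -
  have s: "(\<lambda>n. y ^ n / fact n) sums exp y"
    using exp_converges[of y] by (simp add: divide_inverse mult.commute)
  have "sum (\<lambda>n. y ^ n / fact n) {m} \<le> suminf (\<lambda>n. y ^ n / fact n)"
    by (rule sum_le_suminf) (use s assms in \<open>auto simp: sums_iff\<close>)
  then have "y ^ m / fact m \<le> exp y" using s by (simp add: sums_iff)
  then show ?thesis by (simp add: field_simps)
qed

lemma abs_pow_le_fact_exp:
  fixes x :: real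
  shows "\<bar>x\<bar> ^ m \<le> fact m * exp \<bar>x\<bar>"
  by (rule pow_le_fact_exp) simp

lemma exp_taylor2_bound:
  fixes y :: real
  shows "\<bar>exp y - 1 - y\<bar> \<le> y\<^sup>2 * exp \<bar>y\<bar>"
proof -
  obtain t where t: "\<bar>t\<bar> \<le> \<bar>y\<bar>" "exp y = (\<Sum>m<2. (y ^ m) / fact m) + (exp t / fact 2) * y ^ 2"
    using Maclaurin_exp_le[of y 2] by blast
  have e: "exp y - 1 - y = exp t / 2 * y\<^sup>2" using t(2) by (simp add: eval_nat_numeral)
  have nn: "0 \<le> exp t / 2 * y\<^sup>2" by simp
  have le1: "exp t / 2 \<le> exp \<bar>y\<bar>"
  proof -
    have "exp t \<le> exp \<bar>y\<bar>" using t(1) by simp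
    moreover have "exp t / 2 \<le> exp t" by simp
    ultimately show ?thesis by linarith
  qed
  have "\<bar>exp y - 1 - y\<bar> = exp t / 2 * y\<^sup>2" unfolding e using nn by (rule abs_of_nonneg)
  also have "\<dots> \<le> exp \<bar>y\<bar> * y\<^sup>2" using le1 by (rule mult_right_mono) simp
  finally show ?thesis by (simp add: mult.commute)
qed

lemma exp_abs_le: "exp (b * x + d * \<bar>x\<bar>) \<le> exp ((b + d) * x) + exp ((b - d) * x)" for b d x :: real
proof (cases "x \<ge> 0")
  case True then have "b * x + d * \<bar>x\<bar> = (b + d) * x" by (simp add: algebra_simps)
  moreover have "0 < exp ((b - d) * x)" by simp
  ultimately show ?thesis by simp
next
  case False then have "b * x + d * \<bar>x\<bar> = (b - d) * x" by (simp add: algebra_simps)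
  moreover have "0 < exp ((b + d) * x)" by simp
  ultimately show ?thesis by simp
qed

lemma sq_div_abs: "h \<noteq> 0 \<Longrightarrow> (h*x)\<^sup>2 / \<bar>h\<bar> = \<bar>h\<bar> * \<bar>x\<bar>^2" for h x :: real
proof -
  assume h: "h \<noteq> 0"
  have "(h*x)\<^sup>2 = \<bar>h\<bar> * (\<bar>h\<bar> * \<bar>x\<bar>^2)" by (simp add: power_mult_distrib abs_mult_self_eq power2_eq_square)
  then show ?thesis using h by simp
qed

locale mgf_finite =
  fixes M :: "real measure"
  assumes fin: "finite_measure M"
    and sM [measurable_cong]: "sets M = sets borel"
    and intexp: "\<And>b. integrable M (\<lambda>x. exp (b * x))"
begin

lemma integrable_pow_exp:
  assumes "0 \<le> c"
  shows "integrable M (\<lambda>x. \<bar>x\<bar> ^ m * exp (b * x + c * \<bar>x\<bar>))"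
proof (rule Bochner_Integration.integrable_bound)
  show "integrable M (\<lambda>x. fact m * (exp ((b + (c+1)) * x) + exp ((b - (c+1)) * x)))"
    by (intro integrable_mult_right Bochner_Integration.integrable_add intexp)
  show "(\<lambda>x. \<bar>x\<bar> ^ m * exp (b * x + c * \<bar>x\<bar>)) \<in> borel_measurable M" by measurable
  show "AE x in M. norm (\<bar>x\<bar> ^ m * exp (b * x + c * \<bar>x\<bar>))
          \<le> norm (fact m * (exp ((b + (c+1)) * x) + exp ((b - (c+1)) * x)))"
  proof (intro AE_I2)
    fix x :: real
    have "\<bar>x\<bar> ^ m * exp (b * x + c * \<bar>x\<bar>) \<le> fact m * exp \<bar>x\<bar> * exp (b * x + c * \<bar>x\<bar>)"
      by (intro mult_right_mono abs_pow_le_fact_exp) simp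
    also have "\<dots> = fact m * exp (b * x + (c+1) * \<bar>x\<bar>)"
      by (simp add: exp_add[symmetric] algebra_simps)
    also have "\<dots> \<le> fact m * (exp ((b + (c+1)) * x) + exp ((b - (c+1)) * x))"
      by (intro mult_left_mono exp_abs_le) simp
    finally show "norm (\<bar>x\<bar> ^ m * exp (b * x + c * \<bar>x\<bar>))
          \<le> norm (fact m * (exp ((b + (c+1)) * x) + exp ((b - (c+1)) * x)))"
      by (simp add: abs_mult)
  qed
qed

lemma integrable_pow_exp': "integrable M (\<lambda>x. x ^ m * exp (b * x))"
proof (rule Bochner_Integration.integrable_bound[OF integrable_pow_exp[of 0 m b]])
  show "AE x in M. norm (x ^ m * exp (b * x)) \<le> norm (\<bar>x\<bar> ^ m * exp (b * x + 0 * \<bar>x\<bar>))"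
    by (simp add: abs_mult power_abs)
qed auto

definition g :: "nat \<Rightarrow> real \<Rightarrow> real" where
  "g k b = (\<integral>x. x ^ k * exp (b * x) \<partial>M)"

lemma g_deriv: "(g k has_real_derivative g (Suc k) b) (at b)"
proof -
  define C where "C = (\<integral>x. \<bar>x\<bar> ^ (k+2) * exp (b * x + 1 * \<bar>x\<bar>) \<partial>M)"
  have key: "\<bar>(g k (b + h) - g k b) / h - g (Suc k) b\<bar> \<le> \<bar>h\<bar> * C"
    if h: "h \<noteq> 0" "\<bar>h\<bar> \<le> 1" for h
  proof -
    have i1: "integrable M (\<lambda>x. x ^ k * exp ((b + h) * x))" by (rule integrable_pow_exp')
    have i2: "integrable M (\<lambda>x. x ^ k * exp (b * x))" by (rule integrable_pow_exp')
    have i3: "integrable M (\<lambda>x. x ^ Suc k * exp (b * x))" by (rule integrable_pow_exp')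
    have eq: "(g k (b + h) - g k b) / h - g (Suc k) b =
      (\<integral>x. (x ^ k * exp ((b + h) * x) - x ^ k * exp (b * x)) / h - x ^ Suc k * exp (b * x) \<partial>M)"
      unfolding g_def
      using i1 i2 i3 by (simp add: Bochner_Integration.integral_diff)
    have pt: "\<bar>(x ^ k * exp ((b + h) * x) - x ^ k * exp (b * x)) / h - x ^ Suc k * exp (b * x)\<bar>
            \<le> \<bar>h\<bar> * (\<bar>x\<bar> ^ (k+2) * exp (b * x + 1 * \<bar>x\<bar>))" for x
    proof -
      have "(x ^ k * exp ((b + h) * x) - x ^ k * exp (b * x)) / h - x ^ Suc k * exp (b * x)
          = x ^ k * exp (b * x) * (exp (h * x) - 1 - h * x) / h"
        using h by (simp add: field_simps exp_add distrib_right)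
      then have "\<bar>(x ^ k * exp ((b + h) * x) - x ^ k * exp (b * x)) / h - x ^ Suc k * exp (b * x)\<bar>
          = \<bar>x\<bar> ^ k * exp (b * x) * \<bar>exp (h * x) - 1 - h * x\<bar> / \<bar>h\<bar>"
        by (simp add: abs_mult power_abs)
      also have "\<dots> \<le> \<bar>x\<bar> ^ k * exp (b * x) * ((h * x)\<^sup>2 * exp \<bar>h * x\<bar>) / \<bar>h\<bar>"
        by (intro divide_right_mono mult_left_mono exp_taylor2_bound) auto
      also have "\<dots> \<le> \<bar>x\<bar> ^ k * exp (b * x) * ((h * x)\<^sup>2 * exp \<bar>x\<bar>) / \<bar>h\<bar>"
        using h by (intro divide_right_mono mult_left_mono) (auto simp: abs_mult mult_left_le_one_le)
      also have "\<dots> = \<bar>x\<bar> ^ k * exp (b * x) * ((h * x)\<^sup>2 / \<bar>h\<bar>) * exp \<bar>x\<bar>"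
        by simp
      also have "\<dots> = \<bar>h\<bar> * (\<bar>x\<bar> ^ k * \<bar>x\<bar>^2 * (exp (b * x) * exp \<bar>x\<bar>))"
        unfolding sq_div_abs[OF h(1)] by simp
      also have "\<dots> = \<bar>h\<bar> * (\<bar>x\<bar> ^ (k+2) * exp (b * x + 1 * \<bar>x\<bar>))"
        by (simp add: exp_add power_add power2_eq_square)
      finally show ?thesis .
    qed
    have "\<bar>(g k (b + h) - g k b) / h - g (Suc k) b\<bar>
       \<le> (\<integral>x. \<bar>h\<bar> * (\<bar>x\<bar> ^ (k+2) * exp (b * x + 1 * \<bar>x\<bar>)) \<partial>M)"
      unfolding eq
    proof (rule integral_abs_bound_integral)
      show "integrable M (\<lambda>x. (x ^ k * exp ((b + h) * x) - x ^ k * exp (b * x)) / h - x ^ Suc k * exp (b * x))"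
        by (intro Bochner_Integration.integrable_diff integrable_divide_zero i1 i2 i3)
      show "integrable M (\<lambda>x. \<bar>h\<bar> * (\<bar>x\<bar> ^ (k+2) * exp (b * x + 1 * \<bar>x\<bar>)))"
        by (intro integrable_mult_right integrable_pow_exp) simp
    qed (rule pt)
    also have "\<dots> = \<bar>h\<bar> * C" unfolding C_def by simp
    finally show ?thesis .
  qed
  have "((\<lambda>h. (g k (b + h) - g k b) / h - g (Suc k) b) \<longlongrightarrow> 0) (at 0)"
  proof (rule Lim_null_comparison)
    show "\<forall>\<^sub>F h in at 0. norm ((g k (b + h) - g k b) / h - g (Suc k) b) \<le> \<bar>h\<bar> * C"
    proof -
      have *: "\<forall>h. h \<noteq> 0 \<and> dist h 0 < 1 \<longrightarrow> norm ((g k (b + h) - g k b) / h - g (Suc k) b) \<le> \<bar>h\<bar> * C"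
        using key by (simp add: dist_real_def)
      show ?thesis unfolding eventually_at using * by (intro exI[of _ 1]) simp
    qed
    show "((\<lambda>h. \<bar>h\<bar> * C) \<longlongrightarrow> 0) (at (0::real))"
      by (auto intro!: tendsto_eq_intros)
  qed
  then have "((\<lambda>h. (g k (b + h) - g k b) / h) \<longlongrightarrow> g (Suc k) b) (at 0)"
    by (rule LIM_zero_cancel)
  then show ?thesis by (subst DERIV_def)
qed

end

lemma mgf_moments_eq:
  assumes "mgf_finite M1" "mgf_finite M2"
    and eq: "\<And>b. (\<integral>x. exp (b * x) \<partial>M1) = (\<integral>x. exp (b * x) \<partial>M2)"
  shows "mgf_finite.g M1 k = mgf_finite.g M2 k"
proof (induction k)
  case 0 then show ?case
    by (auto simp: mgf_finite.g_def[OF assms(1)] mgf_finite.g_def[OF assms(2)] eq)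
next
  case (Suc k)
  show ?case
  proof
    fix b
    from mgf_finite.g_deriv[OF assms(1), of k b] mgf_finite.g_deriv[OF assms(2), of k b] Suc
    show "mgf_finite.g M1 (Suc k) b = mgf_finite.g M2 (Suc k) b"
      using DERIV_unique by metis
  qed
qed


lemma partial_exp_le:
  fixes y :: real assumes "0 \<le> y"
  shows "(\<Sum>k<N. y ^ k / fact k) \<le> exp y"
proof -
  have s: "(\<lambda>n. y ^ n / fact n) sums exp y"
    using exp_converges[of y] by (simp add: divide_inverse mult.commute)
  have "sum (\<lambda>n. y ^ n / fact n) {..<N} \<le> suminf (\<lambda>n. y ^ n / fact n)"
    by (rule sum_le_suminf) (use s assms in \<open>auto simp: sums_iff\<close>)
  then show ?thesis using s by (simp add: sums_iff)
qed

lemma char_limit: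
  assumes rd: "real_distribution M" and mf: "mgf_finite M"
  shows "(\<lambda>n. \<Sum>k \<le> n. ((\<i> * t)^k / fact k) * complex_of_real (mgf_finite.g M k 0)) \<longlonglongrightarrow> char M t"
proof -
  interpret real_distribution M by fact
  interpret mgf_finite M by fact
  have intabs: "integrable M (\<lambda>x. \<bar>x\<bar> ^ n)" for n
    using integrable_pow_exp[of 0 n 0] by simp
  have intpow: "integrable M (\<lambda>x. x ^ n)" for n
    using integrable_pow_exp'[of n 0] by simp
  have gk: "g k 0 = expectation (\<lambda>x. x ^ k)" for k unfolding g_def by simp
  define a where "a n = \<bar>t\<bar> ^ n / fact n * expectation (\<lambda>x. \<bar>x\<bar> ^ n)" for n
  have a_eq: "a n = expectation (\<lambda>x. \<bar>t * x\<bar> ^ n / fact n)" for n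
    unfolding a_def by (simp add: abs_mult power_mult_distrib)
  have a_nn: "0 \<le> a n" for n unfolding a_def by (intro mult_nonneg_nonneg integral_nonneg_AE) auto
  have intE: "integrable M (\<lambda>x. exp \<bar>t * x\<bar>)"
    using integrable_pow_exp[of "\<bar>t\<bar>" 0 0] by (simp add: abs_mult)
  have "summable a"
  proof (rule summableI_nonneg_bounded[OF a_nn])
    fix N
    have "(\<Sum>i<N. a i) = expectation (\<lambda>x. \<Sum>i<N. \<bar>t * x\<bar> ^ i / fact i)"
      unfolding a_eq
      by (rule Bochner_Integration.integral_sum[symmetric])
         (auto intro!: integrable_divide_zero simp: abs_mult power_mult_distrib intabs)
    also have "\<dots> \<le> expectation (\<lambda>x. exp \<bar>t * x\<bar>)"
      by (intro integral_mono intE partial_exp_le Bochner_Integration.integrable_sum integrable_divide_zero)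
         (auto simp: abs_mult power_mult_distrib intabs)
    finally show "(\<Sum>i<N. a i) \<le> expectation (\<lambda>x. exp \<bar>t * x\<bar>)" .
  qed
  then have a0: "a \<longlonglongrightarrow> 0" by (rule summable_LIMSEQ_zero)
  have "(\<lambda>n. char M t - (\<Sum>k \<le> n. ((\<i> * t)^k / fact k) * complex_of_real (g k 0))) \<longlonglongrightarrow> 0"
  proof (rule Lim_null_comparison)
    show "\<forall>\<^sub>F n in sequentially. norm (char M t - (\<Sum>k \<le> n. ((\<i> * t)^k / fact k) * complex_of_real (g k 0))) \<le> 2 * a n"
      using char_approx1[of _ t] intpow unfolding gk a_def
      by (intro always_eventually allI) (simp add: mult.assoc)
    show "(\<lambda>n. 2 * a n) \<longlonglongrightarrow> 0" using tendsto_mult_right_zero[OF a0] by simp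
  qed
  then show ?thesis
    by (rule Lim_transform2[rotated]) (auto intro: tendsto_const)
qed


lemma mgf_unique_prob:
  assumes rd1: "real_distribution M1" and rd2: "real_distribution M2"
    and m1: "mgf_finite M1" and m2: "mgf_finite M2"
    and eq: "\<And>b. (\<integral>x. exp (b * x) \<partial>M1) = (\<integral>x. exp (b * x) \<partial>M2)"
  shows "M1 = M2"
proof (rule Levy_uniqueness[OF rd1 rd2])
  have g: "mgf_finite.g M1 k = mgf_finite.g M2 k" for k by (rule mgf_moments_eq[OF m1 m2 eq])
  show "char M1 = char M2"
  proof
    fix t
    show "char M1 t = char M2 t"
      using char_limit[OF rd1 m1, of t] char_limit[OF rd2 m2, of t] unfolding g
      by (rule LIMSEQ_unique)
  qed
qed

lemma mgf_unique:
  fixes M1 M2 :: "real measure"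
  assumes f1: "finite_measure M1" and f2: "finite_measure M2"
    and s1: "sets M1 = sets borel" and s2: "sets M2 = sets borel"
    and i1: "\<And>b. integrable M1 (\<lambda>x. exp (b * x))"
    and i2: "\<And>b. integrable M2 (\<lambda>x. exp (b * x))"
    and eq: "\<And>b. (\<integral>x. exp (b * x) \<partial>M1) = (\<integral>x. exp (b * x) \<partial>M2)"
  shows "M1 = M2"
proof -
  interpret F1: finite_measure M1 by fact
  interpret F2: finite_measure M2 by fact
  have sp1: "space M1 = UNIV" using sets_eq_imp_space_eq[OF s1] by simp
  have sp2: "space M2 = UNIV" using sets_eq_imp_space_eq[OF s2] by simp
  define m where "m = measure M1 UNIV"
  have m2: "measure M2 UNIV = m"
    using eq[of 0] unfolding m_def by (simp add: sp1 sp2)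
  have m_nn: "0 \<le> m" unfolding m_def by simp
  have em1: "emeasure M1 A = ennreal (measure M1 A)" for A by (simp add: F1.emeasure_eq_measure)
  have em2: "emeasure M2 A = ennreal (measure M2 A)" for A by (simp add: F2.emeasure_eq_measure)
  show ?thesis
  proof (cases "m = 0")
    case True
    have z1: "emeasure M1 A = 0" if "A \<in> sets M1" for A
    proof -
      have "measure M1 A \<le> measure M1 (space M1)" by (rule F1.bounded_measure)
      then have "measure M1 A \<le> 0" using True sp1 unfolding m_def by simp
      then have "measure M1 A = 0" using measure_nonneg[of M1 A] by linarith
      then show ?thesis unfolding em1 by simp
    qed
    have z2: "emeasure M2 A = 0" if "A \<in> sets M2" for A
    proof -
      have "measure M2 A \<le> measure M2 (space M2)" by (rule F2.bounded_measure)
      then have "measure M2 A \<le> 0" using True sp2 m2 by simp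
      then have "measure M2 A = 0" using measure_nonneg[of M2 A] by linarith
      then show ?thesis unfolding em2 by simp
    qed
    show ?thesis by (rule measure_eqI) (use s1 s2 z1 z2 in auto)
  next
    case False
    then have mpos: "0 < m" using m_nn by simp
    define N1 where "N1 = density M1 (\<lambda>_. ennreal (1/m))"
    define N2 where "N2 = density M2 (\<lambda>_. ennreal (1/m))"
    have eN1: "emeasure N1 A = ennreal (1/m) * emeasure M1 A" if "A \<in> sets M1" for A
      unfolding N1_def using that by (simp add: emeasure_density nn_integral_cmult_indicator)
    have eN2: "emeasure N2 A = ennreal (1/m) * emeasure M2 A" if "A \<in> sets M2" for A
      unfolding N2_def using that by (simp add: emeasure_density nn_integral_cmult_indicator)
    have sN1 [measurable_cong]: "sets N1 = sets borel" unfolding N1_def using s1 by simp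
    have sN2 [measurable_cong]: "sets N2 = sets borel" unfolding N2_def using s2 by simp
    have spN1: "space N1 = UNIV" unfolding N1_def using sp1 by simp
    have spN2: "space N2 = UNIV" unfolding N2_def using sp2 by simp
    have p1: "prob_space N1"
    proof
      have "emeasure N1 (space N1) = ennreal (1/m) * ennreal m"
        using eN1[of UNIV] sets.top[of M1] sp1 spN1 em1[of UNIV] unfolding m_def by simp
      then show "emeasure N1 (space N1) = 1" using mpos by (simp add: ennreal_mult'[symmetric])
    qed
    have p2: "prob_space N2"
    proof
      have "emeasure N2 (space N2) = ennreal (1/m) * ennreal m"
        using eN2[of UNIV] sets.top[of M2] sp2 spN2 em2[of UNIV] m2 by simp
      then show "emeasure N2 (space N2) = 1" using mpos by (simp add: ennreal_mult'[symmetric])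
    qed
    have rd1: "real_distribution N1" using p1 sN1 by (simp add: real_distribution_def real_distribution_axioms_def)
    have rd2: "real_distribution N2" using p2 sN2 by (simp add: real_distribution_def real_distribution_axioms_def)
    have [measurable_cong]: "sets M1 = sets borel" "sets M2 = sets borel" using s1 s2 by auto
    have iN1: "integrable N1 (\<lambda>x. exp (b * x))" for b
      unfolding N1_def using mpos
      by (subst integrable_density[where g="\<lambda>_. 1/m"]) (auto intro!: integrable_mult_right i1)
    have iN2: "integrable N2 (\<lambda>x. exp (b * x))" for b
      unfolding N2_def using mpos
      by (subst integrable_density[where g="\<lambda>_. 1/m"]) (auto intro!: integrable_mult_right i2)
    have IN1: "(\<integral>x. exp (b * x) \<partial>N1) = (1/m) * (\<integral>x. exp (b * x) \<partial>M1)" for b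
      unfolding N1_def using mpos by (subst integral_density) auto
    have IN2: "(\<integral>x. exp (b * x) \<partial>N2) = (1/m) * (\<integral>x. exp (b * x) \<partial>M2)" for b
      unfolding N2_def using mpos by (subst integral_density) auto
    have mf1: "mgf_finite N1"
      by (rule mgf_finite.intro) (use p1 sN1 iN1 in \<open>auto simp: prob_space_def\<close>)
    have mf2: "mgf_finite N2"
      by (rule mgf_finite.intro) (use p2 sN2 iN2 in \<open>auto simp: prob_space_def\<close>)
    have NN: "N1 = N2" by (rule mgf_unique_prob[OF rd1 rd2 mf1 mf2]) (simp add: IN1 IN2 eq)
    show ?thesis
    proof (rule measure_eqI)
      show "sets M1 = sets M2" using s1 s2 by simp
      fix A assume A: "A \<in> sets M1"
      then have A2: "A \<in> sets M2" using s1 s2 by simp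
      have "ennreal (1/m) * emeasure M1 A = ennreal (1/m) * emeasure M2 A"
        using eN1[OF A] eN2[OF A2] NN by simp
      then show "emeasure M1 A = emeasure M2 A"
        using mpos by (simp add: ennreal_mult_cancel_left)
    qed
  qed
qed


definition boxJ :: "'n::finite set \<Rightarrow> real^'n \<Rightarrow> (real^'n) set" where
  "boxJ J b = {x. \<forall>j\<in>J. x$j \<le> b$j}"

lemma boxJ_eq: "boxJ J b = (\<Inter>j\<in>J. {x. x$j \<le> b$j})"
  unfolding boxJ_def by auto

lemma boxJ_borel[measurable]: "boxJ J b \<in> sets borel"
proof -
  have "closed (boxJ J b)" unfolding boxJ_eq
    by (intro closed_INT ballI closed_halfspace_component_le_cart)
  then show ?thesis by (rule borel_closed)
qed

lemma boxJ_insert: "indicator (boxJ (insert k J) b) x = (indicator (boxJ J b) x * indicator {..b$k} (x$k) :: real)"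
  unfolding boxJ_def by (auto split: split_indicator)

lemma boxJ_empty: "boxJ {} b = UNIV" unfolding boxJ_def by auto

lemma boxJ_UNIV: "boxJ UNIV b = {..b}" unfolding boxJ_def by (auto simp: less_eq_vec_def)

lemma mgf_unique_vec:
  fixes \<mu> \<nu> :: "(real^'n::finite) measure"
  assumes f1: "finite_measure \<mu>" and f2: "finite_measure \<nu>"
    and s1: "sets \<mu> = sets borel" and s2: "sets \<nu> = sets borel"
    and i1: "\<And>a. integrable \<mu> (\<lambda>x. exp (a \<bullet> x))"
    and i2: "\<And>a. integrable \<nu> (\<lambda>x. exp (a \<bullet> x))"
    and eq: "\<And>a. (\<integral>x. exp (a \<bullet> x) \<partial>\<mu>) = (\<integral>x. exp (a \<bullet> x) \<partial>\<nu>)"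
  shows "\<mu> = \<nu>"
proof -
  interpret F1: finite_measure \<mu> by fact
  interpret F2: finite_measure \<nu> by fact
  have [measurable_cong]: "sets \<mu> = sets borel" "sets \<nu> = sets borel" using s1 s2 by auto
  have sp1: "space \<mu> = UNIV" using sets_eq_imp_space_eq[OF s1] by simp
  have sp2: "space \<nu> = UNIV" using sets_eq_imp_space_eq[OF s2] by simp
  have claim: "\<forall>a b. (\<forall>j\<in>J. a$j = 0) \<longrightarrow>
      (\<integral>x. exp (a \<bullet> x) * indicator (boxJ J b) x \<partial>\<mu>) = (\<integral>x. exp (a \<bullet> x) * indicator (boxJ J b) x \<partial>\<nu>)"
    for J :: "'n set"
  proof -
    have "finite J" by simp
    then show ?thesis
    proof (induction J rule: finite_induct)
      case empty
      show ?case using eq by (simp add: boxJ_empty)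
    next
      case (insert k J)
      show ?case
      proof (intro allI impI)
        fix a b :: "real^'n"
        assume a0: "\<forall>j\<in>insert k J. a$j = 0"
        define w where "w x = exp (a \<bullet> x) * indicator (boxJ J b) x" for x
        have w_meas[measurable]: "w \<in> borel_measurable borel" unfolding w_def by measurable
        have w_nn: "0 \<le> w x" for x unfolding w_def by simp
        have shift: "w x * exp (\<beta> * x$k) = exp ((a + \<beta> *\<^sub>R axis k 1) \<bullet> x) * indicator (boxJ J b) x" for x \<beta>
          unfolding w_def by (simp add: inner_add_left inner_axis' exp_add algebra_simps)
        have a'0: "\<forall>j\<in>J. (a + \<beta> *\<^sub>R axis k 1) $ j = 0" for \<beta>
          using a0 insert.hyps(2) by (auto simp: axis_def)
        define \<mu>' where "\<mu>' = distr (density \<mu> w) borel (\<lambda>x. x$k)"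
        define \<nu>' where "\<nu>' = distr (density \<nu> w) borel (\<lambda>x. x$k)"
        have iw1: "integrable \<mu> w"
          using integrable_mult_indicator[OF _ i1[of a], of "boxJ J b"] unfolding w_def
          by (simp add: mult.commute)
        have iw2: "integrable \<nu> w"
          using integrable_mult_indicator[OF _ i2[of a], of "boxJ J b"] unfolding w_def
          by (simp add: mult.commute)
        have fd1: "finite_measure (density \<mu> w)"
        proof
          have "emeasure (density \<mu> w) (space (density \<mu> w)) = (\<integral>\<^sup>+ x. ennreal (w x) \<partial>\<mu>)"
            by (simp add: emeasure_density sp1)
          also have "\<dots> = ennreal (\<integral>x. w x \<partial>\<mu>)"
            by (rule nn_integral_eq_integral[OF iw1]) (simp add: w_nn)
          finally show "emeasure (density \<mu> w) (space (density \<mu> w)) \<noteq> \<infinity>" by simp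
        qed
        have fd2: "finite_measure (density \<nu> w)"
        proof
          have "emeasure (density \<nu> w) (space (density \<nu> w)) = (\<integral>\<^sup>+ x. ennreal (w x) \<partial>\<nu>)"
            by (simp add: emeasure_density sp2)
          also have "\<dots> = ennreal (\<integral>x. w x \<partial>\<nu>)"
            by (rule nn_integral_eq_integral[OF iw2]) (simp add: w_nn)
          finally show "emeasure (density \<nu> w) (space (density \<nu> w)) \<noteq> \<infinity>" by simp
        qed
        have fm1: "finite_measure \<mu>'" unfolding \<mu>'_def
          by (rule finite_measure.finite_measure_distr[OF fd1]) simp
        have fm2: "finite_measure \<nu>'" unfolding \<nu>'_def
          by (rule finite_measure.finite_measure_distr[OF fd2]) simp
        have int1: "integrable \<mu>' g \<longleftrightarrow> integrable \<mu> (\<lambda>x. w x * g (x$k))"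
          if [measurable]: "g \<in> borel_measurable borel" for g :: "real \<Rightarrow> real"
          unfolding \<mu>'_def by (simp add: integrable_distr_eq integrable_density w_nn)
        have int2: "integrable \<nu>' g \<longleftrightarrow> integrable \<nu> (\<lambda>x. w x * g (x$k))"
          if [measurable]: "g \<in> borel_measurable borel" for g :: "real \<Rightarrow> real"
          unfolding \<nu>'_def by (simp add: integrable_distr_eq integrable_density w_nn)
        have I1: "(\<integral>y. g y \<partial>\<mu>') = (\<integral>x. w x * g (x$k) \<partial>\<mu>)"
          if [measurable]: "g \<in> borel_measurable borel" for g :: "real \<Rightarrow> real"
          unfolding \<mu>'_def by (simp add: integral_distr integral_density w_nn)
        have I2: "(\<integral>y. g y \<partial>\<nu>') = (\<integral>x. w x * g (x$k) \<partial>\<nu>)"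
          if [measurable]: "g \<in> borel_measurable borel" for g :: "real \<Rightarrow> real"
          unfolding \<nu>'_def by (simp add: integral_distr integral_density w_nn)
        have eqm: "\<mu>' = \<nu>'"
        proof (rule mgf_unique[OF fm1 fm2])
          show "sets \<mu>' = sets borel" "sets \<nu>' = sets borel" unfolding \<mu>'_def \<nu>'_def by simp_all
          fix \<beta> :: real
          have gm: "(\<lambda>y. exp (\<beta> * y)) \<in> borel_measurable borel" by measurable
          show "integrable \<mu>' (\<lambda>x. exp (\<beta> * x))"
            unfolding int1[OF gm]
            unfolding shift using integrable_mult_indicator[OF _ i1[of "a + \<beta> *\<^sub>R axis k 1"], of "boxJ J b"]
            by (simp add: mult.commute)
          show "integrable \<nu>' (\<lambda>x. exp (\<beta> * x))"
            unfolding int2[OF gm]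
            unfolding shift using integrable_mult_indicator[OF _ i2[of "a + \<beta> *\<^sub>R axis k 1"], of "boxJ J b"]
            by (simp add: mult.commute)
          show "(\<integral>x. exp (\<beta> * x) \<partial>\<mu>') = (\<integral>x. exp (\<beta> * x) \<partial>\<nu>')"
            unfolding I1[OF gm]
              I2[OF gm]
            unfolding shift using insert.IH a'0 by blast
        qed
        note x1 = I1[OF borel_measurable_indicator[OF atMost_borel], of "b$k"]
        note x2 = I2[OF borel_measurable_indicator[OF atMost_borel], of "b$k"]
        have "(\<integral>x. w x * indicator {..b$k} (x$k) \<partial>\<mu>) = (\<integral>x. w x * indicator {..b$k} (x$k) \<partial>\<nu>)"
          by (simp only: x1[symmetric] x2[symmetric] eqm)
        then show "(\<integral>x. exp (a \<bullet> x) * indicator (boxJ (insert k J) b) x \<partial>\<mu>) =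
                   (\<integral>x. exp (a \<bullet> x) * indicator (boxJ (insert k J) b) x \<partial>\<nu>)"
          unfolding boxJ_insert w_def by (simp add: mult.assoc)
      qed
    qed
  qed
  have meq: "measure \<mu> {..b} = measure \<nu> {..b}" for b
  proof -
    have "(\<integral>x. exp (0 \<bullet> x) * indicator (boxJ UNIV b) x \<partial>\<mu>) = (\<integral>x. exp (0 \<bullet> x) * indicator (boxJ UNIV b) x \<partial>\<nu>)"
      using claim[of UNIV, rule_format, of 0 b] by simp
    then show ?thesis by (simp add: boxJ_UNIV sp1 sp2)
  qed
  show ?thesis
  proof (rule measure_eqI_generator_eq[where E="range atMost" and \<Omega>=UNIV and A="\<lambda>i. {..(\<chi> j. real i)}"])
    show "Int_stable (range atMost :: (real^'n) set set)"
    proof (rule Int_stableI)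
      fix A B :: "(real^'n) set" assume "A \<in> range atMost" "B \<in> range atMost"
      then obtain a b where "A = {..a}" "B = {..b}" by auto
      then have "A \<inter> B = {..inf a b}" by auto
      then show "A \<inter> B \<in> range atMost" by auto
    qed
    show "range atMost \<subseteq> Pow (UNIV :: (real^'n) set)" by simp
    show "emeasure \<mu> X = emeasure \<nu> X" if "X \<in> range atMost" for X
      using that meq by (auto simp: F1.emeasure_eq_measure F2.emeasure_eq_measure)
    have sg: "sets (borel :: (real^'n) measure) = sigma_sets UNIV (range atMost)"
      by (subst borel_eq_atMost) (simp add: sets_measure_of)
    show "sets \<mu> = sigma_sets UNIV (range atMost)" using s1 sg by simp
    show "sets \<nu> = sigma_sets UNIV (range atMost)" using s2 sg by simp
    show "range (\<lambda>i. {..(\<chi> j. real i)}) \<subseteq> range atMost" by auto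
    show "(\<Union>i. {..(\<chi> j. real i)}) = (UNIV :: (real^'n) set)"
    proof (safe)
      fix x :: "real^'n"
      have "x \<le> (\<chi> j. real (nat \<lceil>norm x\<rceil>))"
        unfolding less_eq_vec_def
      proof
        fix j
        have "x$j \<le> norm x" using component_le_norm_cart[of x j] by linarith
        also have "\<dots> \<le> real (nat \<lceil>norm x\<rceil>)" by linarith
        finally show "x$j \<le> (\<chi> j. real (nat \<lceil>norm x\<rceil>)) $ j" by simp
      qed
      then show "x \<in> (\<Union>i. {..(\<chi> j. real i)})" by blast
    qed auto
    show "emeasure \<mu> {..(\<chi> j. real i)} \<noteq> \<infinity>" for i by simp
  qed
qed


lemma normal_exp_shift:
  assumes "0 < \<sigma>"
  shows "normal_density 0 \<sigma> x * exp x = exp (\<sigma>\<^sup>2 / 2) * normal_density (\<sigma>\<^sup>2) \<sigma> x"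
proof -
  have "- x\<^sup>2 / (2 * \<sigma>\<^sup>2) + x = - (x - \<sigma>\<^sup>2)\<^sup>2 / (2 * \<sigma>\<^sup>2) + \<sigma>\<^sup>2 / 2"
    using assms by (simp add: field_simps power2_eq_square)
  then show ?thesis
    unfolding normal_density_def by (simp add: exp_add[symmetric] mult.commute mult.left_commute)
qed

lemma (in prob_space) gaussian_facts:
  assumes g: "centered_gaussian_rv M W"
  shows "integrable M (\<lambda>\<omega>. (W \<omega>)\<^sup>2)" "integrable M (\<lambda>\<omega>. exp (W \<omega>))"
    "(\<integral>\<omega>. exp (W \<omega>) \<partial>M) = exp ((\<integral>\<omega>. (W \<omega>)\<^sup>2 \<partial>M) / 2)"
proof -
  have Wm[measurable]: "W \<in> borel_measurable M" using g unfolding centered_gaussian_rv_def by simp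
  consider (z) "AE \<omega> in M. W \<omega> = 0" | (n) \<sigma> where "0 < \<sigma>" "distributed M lborel W (normal_density 0 \<sigma>)"
    using g unfolding centered_gaussian_rv_def by blast
  then have "integrable M (\<lambda>\<omega>. (W \<omega>)\<^sup>2) \<and> integrable M (\<lambda>\<omega>. exp (W \<omega>)) \<and>
    (\<integral>\<omega>. exp (W \<omega>) \<partial>M) = exp ((\<integral>\<omega>. (W \<omega>)\<^sup>2 \<partial>M) / 2)"
  proof cases
    case z
    have a1: "AE \<omega> in M. (W \<omega>)\<^sup>2 = 0" using z by eventually_elim simp
    have a2: "AE \<omega> in M. exp (W \<omega>) = 1" using z by eventually_elim simp
    have "integrable M (\<lambda>\<omega>. (W \<omega>)\<^sup>2)"
      using integrable_cong_AE[OF _ _ a1] by simp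
    moreover have "integrable M (\<lambda>\<omega>. exp (W \<omega>))"
      using integrable_cong_AE[OF _ _ a2] by simp
    moreover have "(\<integral>\<omega>. (W \<omega>)\<^sup>2 \<partial>M) = 0" using integral_cong_AE[OF _ _ a1] by simp
    moreover have "(\<integral>\<omega>. exp (W \<omega>) \<partial>M) = 1" using integral_cong_AE[OF _ _ a2] by (simp add: prob_space)
    ultimately show ?thesis by simp
  next
    case n
    have D: "distributed M lborel W (normal_density 0 \<sigma>)" by fact
    have "integrable lborel (\<lambda>x. normal_density 0 \<sigma> x * x\<^sup>2)"
      using integrable_normal_moment[where \<mu>=0 and \<sigma>=\<sigma> and k=2] n(1) by simp
    then have i1: "integrable M (\<lambda>\<omega>. (W \<omega>)\<^sup>2)"
      using distributed_integrable[OF D, of "\<lambda>x. x\<^sup>2"] by simp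
    have "integrable lborel (\<lambda>x. normal_density 0 \<sigma> x * exp x)"
      unfolding normal_exp_shift[OF n(1)] using n(1) by simp
    then have i2: "integrable M (\<lambda>\<omega>. exp (W \<omega>))"
      using distributed_integrable[OF D, of "\<lambda>x. exp x"] by simp
    have "(\<integral>\<omega>. (W \<omega>)\<^sup>2 \<partial>M) = variance W"
      using normal_distributed_expectation[OF n] by simp
    also have "\<dots> = \<sigma>\<^sup>2" using normal_distributed_variance[OF n] .
    finally have v: "(\<integral>\<omega>. (W \<omega>)\<^sup>2 \<partial>M) = \<sigma>\<^sup>2" .
    have "(\<integral>\<omega>. exp (W \<omega>) \<partial>M) = (\<integral>x. normal_density 0 \<sigma> x * exp x \<partial>lborel)"
      using distributed_integral[OF D, of "\<lambda>x. exp x"] by simp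
    also have "\<dots> = exp (\<sigma>\<^sup>2 / 2)"
      unfolding normal_exp_shift[OF n(1)] using n(1) by simp
    finally show ?thesis using i1 i2 v by simp
  qed
  then show "integrable M (\<lambda>\<omega>. (W \<omega>)\<^sup>2)" "integrable M (\<lambda>\<omega>. exp (W \<omega>))"
    "(\<integral>\<omega>. exp (W \<omega>) \<partial>M) = exp ((\<integral>\<omega>. (W \<omega>)\<^sup>2 \<partial>M) / 2)" by auto
qed

lemma gaussian_process_comb:
  assumes gp: "centered_gaussian_process M I X" and K: "finite K" and u: "\<And>k. k \<in> K \<Longrightarrow> u k \<in> I"
  shows "centered_gaussian_rv M (\<lambda>\<omega>. \<Sum>k\<in>K. a k * X (u k) \<omega>)"
proof -
  define c where "c t = (\<Sum>k\<in>{k\<in>K. u k = t}. a k)" for t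
  have "(\<lambda>\<omega>. \<Sum>t\<in>u ` K. c t * X t \<omega>) = (\<lambda>\<omega>. \<Sum>k\<in>K. a k * X (u k) \<omega>)"
  proof
    fix \<omega>
    have "(\<Sum>t\<in>u ` K. c t * X t \<omega>) = (\<Sum>t\<in>u ` K. \<Sum>k\<in>{k\<in>K. u k = t}. a k * X (u k) \<omega>)"
      unfolding c_def sum_distrib_right by (intro sum.cong refl) auto
    also have "\<dots> = (\<Sum>k\<in>K. a k * X (u k) \<omega>)"
      using sum.image_gen[OF K, of "\<lambda>k. a k * X (u k) \<omega>" u] by simp
    finally show "(\<Sum>t\<in>u ` K. c t * X t \<omega>) = (\<Sum>k\<in>K. a k * X (u k) \<omega>)" .
  qed
  moreover have "centered_gaussian_rv M (\<lambda>\<omega>. \<Sum>t\<in>u ` K. c t * X t \<omega>)"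
  proof -
    have sub: "u ` K \<subseteq> I" using u by auto
    have fin: "finite (u ` K)" using K by simp
    show ?thesis using gp fin sub unfolding centered_gaussian_process_def by blast
  qed
  ultimately show ?thesis by simp
qed


lemma (in prob_space) integrable_prod_sq:
  fixes U V :: "'a \<Rightarrow> real"
  assumes [measurable]: "U \<in> borel_measurable M" "V \<in> borel_measurable M"
    and "integrable M (\<lambda>\<omega>. (U \<omega>)\<^sup>2)" "integrable M (\<lambda>\<omega>. (V \<omega>)\<^sup>2)"
  shows "integrable M (\<lambda>\<omega>. U \<omega> * V \<omega>)"
proof (rule Bochner_Integration.integrable_bound)
  show "integrable M (\<lambda>\<omega>. (U \<omega>)\<^sup>2 + (V \<omega>)\<^sup>2)" using assms(3,4) by simp
  show "(\<lambda>\<omega>. U \<omega> * V \<omega>) \<in> borel_measurable M" by measurable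
  show "AE \<omega> in M. norm (U \<omega> * V \<omega>) \<le> norm ((U \<omega>)\<^sup>2 + (V \<omega>)\<^sup>2)"
  proof (intro AE_I2)
    fix \<omega>
    have e: "(\<bar>U \<omega>\<bar> - \<bar>V \<omega>\<bar>)\<^sup>2 = (U \<omega>)\<^sup>2 + (V \<omega>)\<^sup>2 - 2 * (\<bar>U \<omega>\<bar> * \<bar>V \<omega>\<bar>)"
      by (simp add: power2_diff)
    have "0 \<le> (\<bar>U \<omega>\<bar> - \<bar>V \<omega>\<bar>)\<^sup>2" by simp
    moreover have "0 \<le> \<bar>U \<omega>\<bar> * \<bar>V \<omega>\<bar>" by simp
    ultimately have "\<bar>U \<omega> * V \<omega>\<bar> \<le> (U \<omega>)\<^sup>2 + (V \<omega>)\<^sup>2"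
      unfolding e abs_mult by linarith
    then show "norm (U \<omega> * V \<omega>) \<le> norm ((U \<omega>)\<^sup>2 + (V \<omega>)\<^sup>2)" by simp
  qed
qed

lemma (in prob_space) cameron_martin:
  fixes Y :: "'a \<Rightarrow> real^'n::finite" and Z :: "'a \<Rightarrow> real" and h :: "real^'n \<Rightarrow> real"
  assumes Ym[measurable]: "Y \<in> borel_measurable M" and Zm[measurable]: "Z \<in> borel_measurable M"
    and G: "\<And>a \<beta>. centered_gaussian_rv M (\<lambda>\<omega>. a \<bullet> Y \<omega> + \<beta> * Z \<omega>)"
    and hm[measurable]: "h \<in> borel_measurable borel"
  shows "(\<integral>\<omega>. h (Y \<omega>) * exp (Z \<omega> - (\<integral>\<omega>. (Z \<omega>)\<^sup>2 \<partial>M) / 2) \<partial>M)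
       = (\<integral>\<omega>. h (Y \<omega> + (\<chi> j. \<integral>\<omega>. Y \<omega> $ j * Z \<omega> \<partial>M)) \<partial>M)"
proof -
  define v where "v = (\<integral>\<omega>. (Z \<omega>)\<^sup>2 \<partial>M)"
  define c where "c = (\<chi> j. \<integral>\<omega>. Y \<omega> $ j * Z \<omega> \<partial>M)"
  define Q where "Q a = (\<integral>\<omega>. (a \<bullet> Y \<omega>)\<^sup>2 \<partial>M)" for a
  define \<rho> where "\<rho> \<omega> = exp (Z \<omega> - v / 2)" for \<omega>
  have Yjm[measurable]: "(\<lambda>\<omega>. Y \<omega> $ j) \<in> borel_measurable M" for j
    using measurable_compose[OF Ym borel_measurable_nth] by simp
  have \<rho>m[measurable]: "\<rho> \<in> borel_measurable M" unfolding \<rho>_def by measurable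
  have \<rho>nn: "0 \<le> \<rho> \<omega>" for \<omega> unfolding \<rho>_def by simp
  have GY: "centered_gaussian_rv M (\<lambda>\<omega>. a \<bullet> Y \<omega>)" for a using G[of a 0] by simp
  have GZ: "centered_gaussian_rv M Z" using G[of 0 1] by simp
  have GYZ: "centered_gaussian_rv M (\<lambda>\<omega>. a \<bullet> Y \<omega> + Z \<omega>)" for a using G[of a 1] by simp
  have Yj: "(\<lambda>\<omega>. axis j 1 \<bullet> Y \<omega>) = (\<lambda>\<omega>. Y \<omega> $ j)" for j by (simp add: inner_axis')
  have iY2: "integrable M (\<lambda>\<omega>. (a \<bullet> Y \<omega>)\<^sup>2)" for a using gaussian_facts(1)[OF GY] .
  have iZ2: "integrable M (\<lambda>\<omega>. (Z \<omega>)\<^sup>2)" using gaussian_facts(1)[OF GZ] .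
  have iYj2: "integrable M (\<lambda>\<omega>. (Y \<omega> $ j)\<^sup>2)" for j using iY2[of "axis j 1"] by (simp add: inner_axis')
  have iYjZ: "integrable M (\<lambda>\<omega>. Y \<omega> $ j * Z \<omega>)" for j
    by (rule integrable_prod_sq[OF _ _ iYj2 iZ2]; measurable)
  have iYZ: "integrable M (\<lambda>\<omega>. (a \<bullet> Y \<omega>) * Z \<omega>)" for a
    by (rule integrable_prod_sq[OF _ _ iY2 iZ2]; measurable)
  have cov: "(\<integral>\<omega>. (a \<bullet> Y \<omega>) * Z \<omega> \<partial>M) = a \<bullet> c" for a
  proof -
    have "(\<integral>\<omega>. (a \<bullet> Y \<omega>) * Z \<omega> \<partial>M) = (\<integral>\<omega>. (\<Sum>j\<in>UNIV. a $ j * (Y \<omega> $ j * Z \<omega>)) \<partial>M)"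
      by (simp add: inner_vec_def sum_distrib_right mult.assoc)
    also have "\<dots> = (\<Sum>j\<in>UNIV. a $ j * (\<integral>\<omega>. Y \<omega> $ j * Z \<omega> \<partial>M))"
      by (simp add: Bochner_Integration.integral_sum iYjZ)
    also have "\<dots> = a \<bullet> c" by (simp add: c_def inner_vec_def)
    finally show ?thesis .
  qed
  have sq: "(\<integral>\<omega>. (a \<bullet> Y \<omega> + Z \<omega>)\<^sup>2 \<partial>M) = Q a + 2 * (a \<bullet> c) + v" for a
  proof -
    have "(\<integral>\<omega>. (a \<bullet> Y \<omega> + Z \<omega>)\<^sup>2 \<partial>M) = (\<integral>\<omega>. (a \<bullet> Y \<omega>)\<^sup>2 + 2 * ((a \<bullet> Y \<omega>) * Z \<omega>) + (Z \<omega>)\<^sup>2 \<partial>M)"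
      by (intro Bochner_Integration.integral_cong refl) (simp add: power2_sum algebra_simps)
    also have "\<dots> = Q a + 2 * (\<integral>\<omega>. (a \<bullet> Y \<omega>) * Z \<omega> \<partial>M) + v"
      unfolding Q_def v_def using iY2[of a] iYZ[of a] iZ2 by simp
    finally show ?thesis unfolding cov .
  qed
  have iexpYZ: "integrable M (\<lambda>\<omega>. exp (a \<bullet> Y \<omega> + Z \<omega>))" for a using gaussian_facts(2)[OF GYZ] .
  have iexpY: "integrable M (\<lambda>\<omega>. exp (a \<bullet> Y \<omega>))" for a using gaussian_facts(2)[OF GY] .
  have EexpYZ: "(\<integral>\<omega>. exp (a \<bullet> Y \<omega> + Z \<omega>) \<partial>M) = exp ((Q a + 2 * (a \<bullet> c) + v) / 2)" for a
    using gaussian_facts(3)[OF GYZ] unfolding sq .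
  have EexpY: "(\<integral>\<omega>. exp (a \<bullet> Y \<omega>) \<partial>M) = exp (Q a / 2)" for a
    using gaussian_facts(3)[OF GY] unfolding Q_def .
  have EexpZ: "(\<integral>\<omega>. exp (Z \<omega>) \<partial>M) = exp (v / 2)"
    using gaussian_facts(3)[OF GZ] unfolding v_def .
  have r_eq: "\<rho> \<omega> * exp (a \<bullet> Y \<omega>) = exp (- v / 2) * exp (a \<bullet> Y \<omega> + Z \<omega>)" for a \<omega>
    unfolding \<rho>_def by (simp add: exp_add[symmetric] exp_diff[symmetric] algebra_simps)
  define \<mu> where "\<mu> = distr (density M \<rho>) borel Y"
  define \<nu> where "\<nu> = distr M borel (\<lambda>\<omega>. Y \<omega> + c)"
  have i\<rho>: "integrable M \<rho>"
    unfolding \<rho>_def using iexpYZ[of 0] by (simp add: exp_diff)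
  have E\<rho>: "(\<integral>\<omega>. \<rho> \<omega> \<partial>M) = 1"
    unfolding \<rho>_def by (simp add: exp_diff EexpZ)
  have fd: "finite_measure (density M \<rho>)"
  proof
    have "emeasure (density M \<rho>) (space (density M \<rho>)) = (\<integral>\<^sup>+ x. ennreal (\<rho> x) \<partial>M)"
      by (simp add: emeasure_density)
    also have "\<dots> = ennreal (\<integral>x. \<rho> x \<partial>M)"
      by (rule nn_integral_eq_integral[OF i\<rho>]) (simp add: \<rho>nn)
    finally show "emeasure (density M \<rho>) (space (density M \<rho>)) \<noteq> \<infinity>" by simp
  qed
  have f\<mu>: "finite_measure \<mu>" unfolding \<mu>_def
    by (rule finite_measure.finite_measure_distr[OF fd]) simp
  have f\<nu>: "finite_measure \<nu>" unfolding \<nu>_def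
    by (rule finite_measure.finite_measure_distr) (auto intro: finite_measure_axioms)
  have I\<mu>: "(\<integral>x. g x \<partial>\<mu>) = (\<integral>\<omega>. \<rho> \<omega> * g (Y \<omega>) \<partial>M)"
    if [measurable]: "g \<in> borel_measurable borel" for g :: "real^'n \<Rightarrow> real"
    unfolding \<mu>_def by (simp add: integral_distr integral_density \<rho>nn)
  have Int\<mu>: "integrable \<mu> g \<longleftrightarrow> integrable M (\<lambda>\<omega>. \<rho> \<omega> * g (Y \<omega>))"
    if [measurable]: "g \<in> borel_measurable borel" for g :: "real^'n \<Rightarrow> real"
    unfolding \<mu>_def by (simp add: integrable_distr_eq integrable_density \<rho>nn)
  have I\<nu>: "(\<integral>x. g x \<partial>\<nu>) = (\<integral>\<omega>. g (Y \<omega> + c) \<partial>M)"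
    if [measurable]: "g \<in> borel_measurable borel" for g :: "real^'n \<Rightarrow> real"
    unfolding \<nu>_def by (simp add: integral_distr)
  have Int\<nu>: "integrable \<nu> g \<longleftrightarrow> integrable M (\<lambda>\<omega>. g (Y \<omega> + c))"
    if [measurable]: "g \<in> borel_measurable borel" for g :: "real^'n \<Rightarrow> real"
    unfolding \<nu>_def by (simp add: integrable_distr_eq)
  have "\<mu> = \<nu>"
  proof (rule mgf_unique_vec[OF f\<mu> f\<nu>])
    show "sets \<mu> = sets borel" "sets \<nu> = sets borel" unfolding \<mu>_def \<nu>_def by simp_all
    fix a :: "real^'n"
    have gm: "(\<lambda>x. exp (a \<bullet> x)) \<in> borel_measurable borel" by measurable
    show "integrable \<mu> (\<lambda>x. exp (a \<bullet> x))"
      unfolding Int\<mu>[OF gm] r_eq using iexpYZ[of a] by simp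
    show "integrable \<nu> (\<lambda>x. exp (a \<bullet> x))"
      unfolding Int\<nu>[OF gm] using iexpY[of a] by (simp add: inner_add_right exp_add)
    have "(\<integral>x. exp (a \<bullet> x) \<partial>\<mu>) = exp (- v / 2) * exp ((Q a + 2 * (a \<bullet> c) + v) / 2)"
      unfolding I\<mu>[OF gm] r_eq by (simp add: EexpYZ)
    also have "\<dots> = exp (a \<bullet> c) * exp (Q a / 2)"
      by (simp add: exp_add[symmetric] field_simps)
    also have "\<dots> = (\<integral>x. exp (a \<bullet> x) \<partial>\<nu>)"
      unfolding I\<nu>[OF gm] by (simp add: inner_add_right exp_add EexpY)
    finally show "(\<integral>x. exp (a \<bullet> x) \<partial>\<mu>) = (\<integral>x. exp (a \<bullet> x) \<partial>\<nu>)" .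
  qed
  then have "(\<integral>x. h x \<partial>\<mu>) = (\<integral>x. h x \<partial>\<nu>)" by simp
  then show ?thesis
    unfolding I\<mu>[OF hm] I\<nu>[OF hm] \<rho>_def v_def c_def by (simp add: mult.commute)
qed


locale psetting =
  fixes M :: "'a measure" and X :: "real \<Rightarrow> 'a \<Rightarrow> real" and R :: "real \<Rightarrow> real \<Rightarrow> real"
    and lam :: real and t :: real
    and ts :: "'n::finite \<Rightarrow> real" and f :: "real^'n \<Rightarrow> real"
  assumes ps: "prob_space M"
    and gauss: "centered_gaussian_process M {0..} X"
    and meas: "(\<lambda>(s, \<omega>). X s \<omega>) \<in> borel_measurable (restrict_space lborel {0..} \<Otimes>\<^sub>M M)"
    and X0: "\<forall>\<omega>\<in>space M. X 0 \<omega> = 0"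
    and R_def: "\<forall>s\<ge>0. \<forall>t\<ge>0. R s t = (\<integral>\<omega>. X s \<omega> * X t \<omega> \<partial>M)"
    and R_cont: "continuous_on ({0..} \<times> {0..}) (\<lambda>(s, t). R s t)"
    and R_diff: "\<forall>s t. s > 0 \<longrightarrow> t > 0 \<longrightarrow> s \<noteq> t \<longrightarrow> (\<lambda>s'. R s' t) differentiable (at s)"
    and R_bound: "\<forall>T>0. \<exists>C::real. \<forall>u\<in>{0..T}.
                    (\<integral>\<^sup>+ s\<in>{0..T}. ennreal \<bar>deriv (\<lambda>s'. R s' u) s\<bar> \<partial>lborel) \<le> ennreal C"
    and lam: "lam > 0"
    and t: "t > 0"
    and ts: "\<forall>i. ts i > 0"
    and f: "Cb_inf f"
begin

sublocale prob_space M by (rule ps)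

definition D :: "'n \<Rightarrow> real \<Rightarrow> real" where
  "D i s = deriv (\<lambda>s'. R s' (ts i)) s"

lemma Xm[measurable]: "0 \<le> u \<Longrightarrow> X u \<in> borel_measurable M"
  using gauss unfolding centered_gaussian_process_def by auto

lemma gaussX:
  assumes "finite K" "\<And>k. k \<in> K \<Longrightarrow> 0 \<le> u k"
  shows "centered_gaussian_rv M (\<lambda>\<omega>. \<Sum>k\<in>K. a k * X (u k) \<omega>)"
  by (rule gaussian_process_comb[OF gauss]) (use assms in auto)

lemma gaussX1: "0 \<le> u \<Longrightarrow> centered_gaussian_rv M (X u)"
  using gaussX[of "{()}" "\<lambda>_. u" "\<lambda>_. 1"] by simp

lemma X2: "0 \<le> u \<Longrightarrow> integrable M (\<lambda>\<omega>. (X u \<omega>)\<^sup>2)"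
  using gaussian_facts(1)[OF gaussX1] by simp

lemma R_sym: "0 \<le> a \<Longrightarrow> 0 \<le> b \<Longrightarrow> R a b = R b a"
  using R_def by (simp add: mult.commute)

lemma R_zero: "0 \<le> a \<Longrightarrow> R a 0 = 0"
proof -
  assume a: "0 \<le> a"
  have "R a 0 = (\<integral>\<omega>. X a \<omega> * X 0 \<omega> \<partial>M)" using R_def a by simp
  also have "\<dots> = (\<integral>\<omega>. 0 \<partial>M)" by (rule Bochner_Integration.integral_cong) (use X0 in auto)
  finally show ?thesis by simp
qed

lemma R_diag: "0 \<le> a \<Longrightarrow> R a a = (\<integral>\<omega>. (X a \<omega>)\<^sup>2 \<partial>M)"
  using R_def by (simp add: power2_eq_square)

lemma R_cont2: "0 \<le> u \<Longrightarrow> continuous_on {0..} (\<lambda>s. R u s)"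
  by (rule continuous_on_compose2[OF R_cont, where f="\<lambda>s. (u, s)", simplified])
     (auto intro!: continuous_intros)

lemma R_cont1: "0 \<le> u \<Longrightarrow> continuous_on {0..} (\<lambda>s. R s u)"
  by (rule continuous_on_compose2[OF R_cont, where f="\<lambda>s. (s, u)", simplified])
     (auto intro!: continuous_intros)

lemma R_contd: "continuous_on {0..} (\<lambda>s. R s s)"
  by (rule continuous_on_compose2[OF R_cont, where f="\<lambda>s. (s, s)", simplified])
     (auto intro!: continuous_intros)

lemma D_deriv1: "0 < s \<Longrightarrow> s \<noteq> ts i \<Longrightarrow> ((\<lambda>s'. R s' (ts i)) has_real_derivative D i s) (at s)"
  unfolding D_def using R_diff ts by (simp add: DERIV_deriv_iff_real_differentiable)

lemma D_deriv2: "0 < s \<Longrightarrow> s \<noteq> ts i \<Longrightarrow> ((\<lambda>s'. R (ts i) s') has_real_derivative D i s) (at s)"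
proof -
  assume s: "0 < s" "s \<noteq> ts i"
  show ?thesis
  proof (rule has_field_derivative_transform_within_open[OF D_deriv1[OF s], where S="{0<..}"])
    show "open {0::real<..}" by simp
    show "s \<in> {0<..}" using s by simp
    fix x :: real assume "x \<in> {0<..}"
    then show "R x (ts i) = R (ts i) x" using R_sym[of x "ts i"] ts by (simp add: less_imp_le)
  qed
qed

definition E :: "'n \<Rightarrow> real \<Rightarrow> real" where
  "E i s = (if 0 < s \<and> s \<noteq> ts i then D i s else 0)"

lemma E_meas[measurable]: "E i \<in> borel_measurable borel"
proof -
  define g where "g s = R (max 0 s) (ts i)" for s
  have gc: "continuous_on UNIV g"
    unfolding g_def
    by (rule continuous_on_compose2[OF R_cont1[of "ts i"], where f="\<lambda>s. max 0 s"])
       (use ts in \<open>auto intro!: continuous_intros simp: less_imp_le\<close>)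
  have gm[measurable]: "g \<in> borel_measurable borel" by (rule borel_measurable_continuous_onI[OF gc])
  define q where "q n s = (if 0 < s \<and> s \<noteq> ts i then (g (s + 1 / real (Suc n)) - g s) * real (Suc n) else 0)" for n s
  have qm: "q n \<in> borel_measurable borel" for n unfolding q_def by measurable
  have conv: "(\<lambda>n. q n s) \<longlonglongrightarrow> E i s" for s
  proof (cases "0 < s \<and> s \<noteq> ts i")
    case False then have "q n s = 0" "E i s = 0" for n by (auto simp: q_def E_def)
    then show ?thesis by simp
  next
    case True
    have d: "((\<lambda>h. (R (s + h) (ts i) - R s (ts i)) / h) \<longlongrightarrow> D i s) (at 0)"
      using D_deriv1[of s i] True by (simp add: DERIV_def)
    have hseq: "filterlim (\<lambda>n. 1 / real (Suc n)) (at (0::real)) sequentially"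
      by (rule filterlim_atI) (use LIMSEQ_inverse_real_of_nat in \<open>auto simp: divide_inverse\<close>)
    have "((\<lambda>n. (R (s + 1 / real (Suc n)) (ts i) - R s (ts i)) / (1 / real (Suc n))) \<longlongrightarrow> D i s) sequentially"
      by (rule filterlim_compose[OF d hseq])
    moreover have "q n s = (R (s + 1 / real (Suc n)) (ts i) - R s (ts i)) / (1 / real (Suc n))" for n
    proof -
      have "0 < s + 1 / real (Suc n)" using True by (simp add: add_pos_pos)
      then show ?thesis using True unfolding q_def g_def by simp
    qed
    ultimately show ?thesis using True by (simp add: E_def)
  qed
  show ?thesis by (rule borel_measurable_LIMSEQ_real[OF conv qm])
qed

lemma D_ind_eq:
  assumes "0 \<le> T"
  shows "indicator {0..T} s * D i s
     = indicator {0..T} s * E i s + indicator {0} s * D i 0 + indicator {ts i} s * (indicator {0..T} (ts i) * D i (ts i))"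
  using assms ts[rule_format, of i]
  by (cases "s = 0"; cases "s = ts i"; cases "0 < s") (auto simp: E_def split: split_indicator)

lemma D_meas[measurable]: "0 \<le> T \<Longrightarrow> (\<lambda>s. indicator {0..T} s * D i s) \<in> borel_measurable borel"
  by (subst D_ind_eq) simp_all

lemma D_integrable: "0 \<le> T \<Longrightarrow> T \<le> T' \<Longrightarrow> ts i \<le> T' \<Longrightarrow> 0 < T' \<Longrightarrow> integrable lborel (\<lambda>s. indicator {0..T} s * D i s)"
proof -
  assume T: "0 \<le> T" "T \<le> T'" "ts i \<le> T'" "0 < T'"
  obtain C where C: "\<forall>u\<in>{0..T'}. (\<integral>\<^sup>+ s\<in>{0..T'}. ennreal \<bar>deriv (\<lambda>s'. R s' u) s\<bar> \<partial>lborel) \<le> ennreal C"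
    using R_bound T(4) by blast
  have u: "ts i \<in> {0..T'}" using T ts by (simp add: less_imp_le)
  have "(\<integral>\<^sup>+ s. norm (indicator {0..T} s * D i s) \<partial>lborel) \<le> (\<integral>\<^sup>+ s\<in>{0..T'}. ennreal \<bar>D i s\<bar> \<partial>lborel)"
    by (intro nn_integral_mono) (use T in \<open>auto split: split_indicator\<close>)
  also have "\<dots> \<le> ennreal C" using C u unfolding D_def by blast
  also have "\<dots> < \<infinity>" by simp
  finally show ?thesis by (intro integrableI_bounded) (use T in simp_all)
qed

end


lemma integrable_bdd_mult:
  fixes g h :: "'b \<Rightarrow> real"
  assumes "integrable N h" "g \<in> borel_measurable N" "\<And>x. \<bar>g x\<bar> \<le> B"
  shows "integrable N (\<lambda>x. g x * h x)"
proof (rule Bochner_Integration.integrable_bound)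
  show "integrable N (\<lambda>x. B * \<bar>h x\<bar>)" using assms(1) by (intro integrable_mult_right integrable_abs)
  show "(\<lambda>x. g x * h x) \<in> borel_measurable N" using assms(1,2) by measurable
  show "AE x in N. norm (g x * h x) \<le> norm (B * \<bar>h x\<bar>)"
  proof (intro AE_I2)
    fix x
    have B: "0 \<le> B" using assms(3)[of x] by linarith
    have "\<bar>g x * h x\<bar> \<le> B * \<bar>h x\<bar>" unfolding abs_mult by (intro mult_right_mono assms(3)) simp
    then show "norm (g x * h x) \<le> norm (B * \<bar>h x\<bar>)" using B by simp
  qed
qed

context psetting
begin

lemma ip_props: "g \<in> iterated_partials f \<Longrightarrow> (\<forall>x. g differentiable (at x)) \<and> bounded (range g)"
  using f unfolding Cb_inf_def by blast

lemma pd_ip: "pd i f \<in> iterated_partials f"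
  by (intro iterated_partials.step iterated_partials.base)

lemma f_diff: "f differentiable (at x)" using ip_props[OF iterated_partials.base] by blast
lemma pd_diff: "pd i f differentiable (at x)" using ip_props[OF pd_ip] by blast

lemma f_cont: "continuous_on UNIV f"
  by (rule differentiable_imp_continuous_on) (simp add: differentiable_on_def f_diff differentiable_at_withinI)
lemma pd_cont: "continuous_on UNIV (pd i f)"
  by (rule differentiable_imp_continuous_on) (simp add: differentiable_on_def pd_diff differentiable_at_withinI)

lemma f_meas[measurable]: "f \<in> borel_measurable borel" by (rule borel_measurable_continuous_onI[OF f_cont])
lemma pd_meas[measurable]: "pd i f \<in> borel_measurable borel" by (rule borel_measurable_continuous_onI[OF pd_cont])

lemma f_bdd: "\<exists>B. \<forall>x. \<bar>f x\<bar> \<le> B"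
  using ip_props[OF iterated_partials.base] unfolding bounded_iff by auto

lemma pd_bdd: "\<exists>B. \<forall>i x. \<bar>pd i f x\<bar> \<le> B"
proof -
  have "\<forall>i. \<exists>B. \<forall>x. \<bar>pd i f x\<bar> \<le> B"
    using ip_props[OF pd_ip] unfolding bounded_iff by auto
  then obtain B where B: "\<And>i x. \<bar>pd i f x\<bar> \<le> B i" by metis
  have "\<bar>pd i f x\<bar> \<le> (\<Sum>j\<in>UNIV. \<bar>B j\<bar>)" for i x
  proof -
    have "B i \<le> \<bar>B i\<bar>" by simp
    also have "\<dots> \<le> (\<Sum>j\<in>UNIV. \<bar>B j\<bar>)" by (rule member_le_sum) auto
    finally show ?thesis using B[of i x] by linarith
  qed
  then show ?thesis by blast
qed

lemma pd_eq:
  assumes F: "(f has_derivative F) (at x)"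
  shows "pd i f x = F (axis i 1)"
proof -
  have lin: "linear F" using F by (simp add: has_derivative_linear)
  have "((\<lambda>h::real. x + h *\<^sub>R axis i 1) has_derivative (\<lambda>h. h *\<^sub>R axis i 1)) (at 0)"
    by (auto intro!: derivative_eq_intros)
  moreover have "(f has_derivative F) (at (x + 0 *\<^sub>R axis i 1))" using F by simp
  ultimately have "((f \<circ> (\<lambda>h::real. x + h *\<^sub>R axis i 1)) has_derivative (F \<circ> (\<lambda>h. h *\<^sub>R axis i 1))) (at 0)"
    by (rule diff_chain_at)
  moreover have "(F \<circ> (\<lambda>h. h *\<^sub>R axis i 1)) = (\<lambda>h. F (axis i 1) * h)"
    using lin by (auto simp: linear_scale mult.commute)
  ultimately have "((\<lambda>h. f (x + h *\<^sub>R axis i 1)) has_field_derivative F (axis i 1)) (at 0)"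
    by (simp add: has_field_derivative_def comp_def)
  then show ?thesis unfolding pd_def by (rule DERIV_imp_deriv)
qed

definition rr :: "real \<Rightarrow> real^'n" where
  "rr s = (\<chi> j. R (ts j) (max 0 s))"

lemma rr_sum: "rr s = (\<Sum>j\<in>UNIV. R (ts j) (max 0 s) *\<^sub>R axis j 1)"
  unfolding rr_def by (simp add: vec_eq_iff axis_def if_distrib cong: if_cong)

lemma rr_cont: "continuous_on UNIV rr"
proof -
  have "continuous_on UNIV (\<lambda>s. R (ts j) (max 0 s))" for j
    by (rule continuous_on_compose2[OF R_cont2[of "ts j"], where f="\<lambda>s. max 0 s"])
       (use ts in \<open>auto intro!: continuous_intros simp: less_imp_le\<close>)
  then show ?thesis unfolding rr_sum[abs_def] by (intro continuous_intros) auto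
qed

lemma rr_meas[measurable]: "rr \<in> borel_measurable borel" by (rule borel_measurable_continuous_onI[OF rr_cont])

lemma rr0: "rr 0 = 0"
  unfolding rr_def using R_zero ts by (simp add: vec_eq_iff less_imp_le)

lemma rr_nonneg: "0 \<le> s \<Longrightarrow> rr s = (\<chi> j. R (ts j) s)"
  unfolding rr_def by simp

lemma Rmax_deriv: "0 < s \<Longrightarrow> s \<noteq> ts j \<Longrightarrow> ((\<lambda>s. R (ts j) (max 0 s)) has_real_derivative D j s) (at s)"
proof -
  assume s: "0 < s" "s \<noteq> ts j"
  show ?thesis
  proof (rule has_field_derivative_transform_within_open[OF D_deriv2[OF s], where S="{0<..}"])
    show "open {0::real<..}" by simp
    show "s \<in> {0<..}" using s by simp
  qed simp
qed

lemma phi_deriv: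
  assumes s: "0 < s" "s \<notin> range ts"
  shows "((\<lambda>s. f (y + lam *\<^sub>R rr s)) has_real_derivative (lam * (\<Sum>i\<in>UNIV. pd i f (y + lam *\<^sub>R rr s) * D i s))) (at s)"
proof -
  define x where "x = y + lam *\<^sub>R rr s"
  define F where "F = frechet_derivative f (at x)"
  have hF: "(f has_derivative F) (at x)" unfolding F_def using f_diff frechet_derivative_works by blast
  have lin: "linear F" using hF by (simp add: has_derivative_linear)
  have dj: "((\<lambda>s. R (ts j) (max 0 s) *\<^sub>R axis j (1::real)) has_derivative (\<lambda>h. (D j s * h) *\<^sub>R axis j 1)) (at s)" for j
  proof -
    have "s \<noteq> ts j" using s by auto
    then have "((\<lambda>s. R (ts j) (max 0 s)) has_derivative (\<lambda>h. D j s * h)) (at s)"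
      using Rmax_deriv[OF s(1)] by (simp add: has_field_derivative_def)
    then show ?thesis by (rule has_derivative_scaleR_left)
  qed
  have inner: "((\<lambda>s. y + lam *\<^sub>R rr s) has_derivative (\<lambda>h. lam *\<^sub>R (\<Sum>j\<in>UNIV. (D j s * h) *\<^sub>R axis j 1))) (at s)"
  proof -
    have "((\<lambda>s. lam *\<^sub>R (\<Sum>j\<in>UNIV. R (ts j) (max 0 s) *\<^sub>R axis j (1::real))) has_derivative (\<lambda>h. lam *\<^sub>R (\<Sum>j\<in>UNIV. (D j s * h) *\<^sub>R axis j (1::real)))) (at s)"
      by (intro has_derivative_scaleR_right has_derivative_sum) (rule dj)
    from has_derivative_add[OF has_derivative_const[of y] this] show ?thesis
      unfolding rr_sum by simp
  qed
  have chain: "((f \<circ> (\<lambda>s. y + lam *\<^sub>R rr s)) has_derivative (F \<circ> (\<lambda>h. lam *\<^sub>R (\<Sum>j\<in>UNIV. (D j s * h) *\<^sub>R axis j 1)))) (at s)"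
    by (rule diff_chain_at[OF inner]) (use hF in \<open>simp add: x_def\<close>)
  have eqF: "(F \<circ> (\<lambda>h. lam *\<^sub>R (\<Sum>j\<in>UNIV. (D j s * h) *\<^sub>R axis j 1))) = (\<lambda>h. (lam * (\<Sum>i\<in>UNIV. pd i f x * D i s)) * h)"
  proof
    fix h
    have "F (lam *\<^sub>R (\<Sum>j\<in>UNIV. (D j s * h) *\<^sub>R axis j 1)) = lam * (\<Sum>j\<in>UNIV. (D j s * h) * F (axis j 1))"
      using lin by (simp add: linear_scale linear_sum sum_distrib_left mult.assoc)
    also have "\<dots> = (lam * (\<Sum>i\<in>UNIV. pd i f x * D i s)) * h"
      by (simp add: pd_eq[OF hF] sum_distrib_left sum_distrib_right mult_ac)
    finally show "(F \<circ> (\<lambda>h. lam *\<^sub>R (\<Sum>j\<in>UNIV. (D j s * h) *\<^sub>R axis j 1))) h = (lam * (\<Sum>i\<in>UNIV. pd i f x * D i s)) * h"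
      by simp
  qed
  show ?thesis
    using chain unfolding eqF has_field_derivative_def by (simp add: comp_def x_def mult.commute)
qed

end


context psetting
begin

definition Phi :: "real^'n \<Rightarrow> real \<Rightarrow> real" where
  "Phi y s = (\<Sum>i\<in>UNIV. pd i f (y + lam *\<^sub>R rr s) * D i s)"

lemma Dind_int: "integrable lborel (\<lambda>s. indicator {0..t} s * D i s)"
  by (rule D_integrable[where T'="max t (ts i)"]) (use t in auto)

lemma Dind_meas[measurable]: "(\<lambda>s. indicator {0..t} s * D i s) \<in> borel_measurable borel"
  by (rule D_meas) (use t in simp)

lemma Phi_ind: "indicator {0..t} s * Phi y s = (\<Sum>i\<in>UNIV. pd i f (y + lam *\<^sub>R rr s) * (indicator {0..t} s * D i s))"
  unfolding Phi_def by (simp add: sum_distrib_left mult_ac)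

lemma Phi_int: "integrable lborel (\<lambda>s. indicator {0..t} s * Phi y s)"
proof -
  obtain B where B: "\<And>i x. \<bar>pd i f x\<bar> \<le> B" using pd_bdd by blast
  show ?thesis unfolding Phi_ind
    by (intro Bochner_Integration.integrable_sum integrable_bdd_mult[OF Dind_int _ B]) measurable
qed

lemma FTC:
  "f (y + lam *\<^sub>R rr t) - f y = lam * (\<integral>s. indicator {0..t} s * Phi y s \<partial>lborel)"
proof -
  define \<phi> where "\<phi> s = f (y + lam *\<^sub>R rr s)" for s
  have cont: "continuous_on {0..t} \<phi>"
    unfolding \<phi>_def
    by (rule continuous_on_compose2[OF f_cont]) (auto intro!: continuous_intros continuous_on_subset[OF rr_cont])
  have HK: "((\<lambda>s. lam * Phi y s) has_integral (\<phi> t - \<phi> 0)) {0..t}"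
  proof (rule fundamental_theorem_of_calculus_interior_strong[where S="range ts"])
    show "finite (range ts)" by simp
    show "0 \<le> t" using t by simp
    show "continuous_on {0..t} \<phi>" by (rule cont)
    fix s assume "s \<in> {0<..<t} - range ts"
    then have "0 < s" "s \<notin> range ts" by auto
    then show "(\<phi> has_vector_derivative lam * Phi y s) (at s)"
      unfolding \<phi>_def Phi_def has_real_derivative_iff_has_vector_derivative[symmetric]
      by (rule phi_deriv)
  qed
  have iL: "integrable lborel (\<lambda>s. indicator {0..t} s * (lam * Phi y s))"
    using integrable_mult_right[OF Phi_int[of y], of lam] by (simp add: mult_ac)
  define I where "I = (\<integral>s. indicator {0..t} s * (lam * Phi y s) \<partial>lborel)"
  have h1: "((\<lambda>s. indicator {0..t} s * (lam * Phi y s)) has_integral I) UNIV"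
    unfolding I_def by (rule has_integral_integral_lborel[OF iL])
  have eqf: "(\<lambda>s. indicator {0..t} s * (lam * Phi y s)) = (\<lambda>s. if s \<in> {0..t} then lam * Phi y s else 0)"
    by (auto simp: fun_eq_iff split: split_indicator)
  have "((\<lambda>s. if s \<in> {0..t} then lam * Phi y s else 0) has_integral I) UNIV"
    using h1 by (simp only: eqf)
  then have "((\<lambda>s. lam * Phi y s) has_integral I) {0..t}"
    by (rule has_integral_restrict_UNIV[THEN iffD1])
  then have "\<phi> t - \<phi> 0 = I"
    using HK by (rule has_integral_unique[rotated])
  also have "\<dots> = lam * (\<integral>s. indicator {0..t} s * Phi y s \<partial>lborel)"
    unfolding I_def by (simp add: mult_ac)
  finally show ?thesis unfolding \<phi>_def by (simp add: rr0)
qed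

end


context psetting
begin

definition Y :: "'a \<Rightarrow> real^'n" where "Y \<omega> = (\<chi> j. X (ts j) \<omega>)"
definition Ms :: "real \<Rightarrow> 'a \<Rightarrow> real" where "Ms s \<omega> = exp (lam * X s \<omega> - lam\<^sup>2 * R s s / 2)"

lemma Ym[measurable]: "Y \<in> borel_measurable M"
proof (subst borel_measurable_euclidean_space, intro ballI)
  fix b :: "real^'n" assume "b \<in> Basis"
  then obtain j where b: "b = axis j 1" by (auto simp: Basis_vec_def)
  have "(\<lambda>\<omega>. Y \<omega> \<bullet> b) = X (ts j)" unfolding b Y_def by (simp add: inner_axis fun_eq_iff)
  moreover have "X (ts j) \<in> borel_measurable M" using ts by (simp add: less_imp_le)
  ultimately show "(\<lambda>\<omega>. Y \<omega> \<bullet> b) \<in> borel_measurable M" by simp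
qed

lemma sum_option: "(\<Sum>k\<in>(UNIV::'b option set). g k) = g None + (\<Sum>j\<in>(UNIV::'b::finite set). g (Some j))"
  by (simp add: UNIV_option_conv sum.reindex)

lemma Ms_alt: "Ms s \<omega> = exp (lam * X s \<omega> - (lam\<^sup>2 * R s s) / 2)" unfolding Ms_def by simp

lemma CMX:
  assumes s: "0 \<le> s" and h[measurable]: "h \<in> borel_measurable borel"
  shows "(\<integral>\<omega>. h (Y \<omega>) * Ms s \<omega> \<partial>M) = (\<integral>\<omega>. h (Y \<omega> + lam *\<^sub>R rr s) \<partial>M)"
proof -
  have Zm[measurable]: "(\<lambda>\<omega>. lam * X s \<omega>) \<in> borel_measurable M" using s by simp
  have G: "centered_gaussian_rv M (\<lambda>\<omega>. a \<bullet> Y \<omega> + \<beta> * (lam * X s \<omega>))" for a \<beta>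
  proof -
    define u where "u k = (case k of None \<Rightarrow> s | Some j \<Rightarrow> ts j)" for k
    define c where "c k = (case k of None \<Rightarrow> \<beta> * lam | Some j \<Rightarrow> a $ j)" for k
    have "centered_gaussian_rv M (\<lambda>\<omega>. \<Sum>k\<in>UNIV. c k * X (u k) \<omega>)"
      by (rule gaussX) (use s ts in \<open>auto simp: u_def less_imp_le split: option.splits\<close>)
    moreover have "(\<lambda>\<omega>. \<Sum>k\<in>UNIV. c k * X (u k) \<omega>) = (\<lambda>\<omega>. a \<bullet> Y \<omega> + \<beta> * (lam * X s \<omega>))"
      by (simp add: sum_option c_def u_def Y_def inner_vec_def fun_eq_iff mult_ac)
    ultimately show ?thesis by simp
  qed
  have Z2: "(\<integral>\<omega>. (lam * X s \<omega>)\<^sup>2 \<partial>M) = lam\<^sup>2 * R s s"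
    using R_diag[OF s] by (simp add: power_mult_distrib)
  have c: "(\<chi> j. \<integral>\<omega>. Y \<omega> $ j * (lam * X s \<omega>) \<partial>M) = lam *\<^sub>R rr s"
  proof -
    have "(\<integral>\<omega>. Y \<omega> $ j * (lam * X s \<omega>) \<partial>M) = lam * R (ts j) s" for j
      using R_def ts s by (simp add: Y_def less_imp_le mult_ac)
    then show ?thesis by (simp add: vec_eq_iff rr_nonneg[OF s])
  qed
  from cameron_martin[OF Ym Zm G h]
  show ?thesis unfolding Z2 c by (simp add: Ms_alt)
qed

lemma gaussXl: "0 \<le> s \<Longrightarrow> centered_gaussian_rv M (\<lambda>\<omega>. lam * X s \<omega>)"
  using gaussX[of "{()}" "\<lambda>_. s" "\<lambda>_. lam"] by simp

lemma Ms_int: "0 \<le> s \<Longrightarrow> integrable M (Ms s)"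
proof -
  assume s: "0 \<le> s"
  have eq: "Ms s = (\<lambda>\<omega>. exp (lam * X s \<omega>) / exp (lam\<^sup>2 * R s s / 2))"
    by (simp add: fun_eq_iff Ms_def exp_diff)
  show ?thesis unfolding eq
    by (rule integrable_divide_zero) (rule gaussian_facts(2)[OF gaussXl[OF s]])
qed

lemma Ms_nn: "0 \<le> Ms s \<omega>" unfolding Ms_def by simp

lemma Ms_E: "0 \<le> s \<Longrightarrow> (\<integral>\<omega>. Ms s \<omega> \<partial>M) = 1"
proof -
  assume s: "0 \<le> s"
  have e: "(\<integral>\<omega>. exp (lam * X s \<omega>) \<partial>M) = exp (lam\<^sup>2 * R s s / 2)"
    using gaussian_facts(3)[OF gaussXl[OF s]] R_diag[OF s] by (simp add: power_mult_distrib)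
  have "(\<integral>\<omega>. Ms s \<omega> \<partial>M) = (\<integral>\<omega>. exp (lam * X s \<omega>) / exp (lam\<^sup>2 * R s s / 2) \<partial>M)"
    unfolding Ms_def by (simp add: exp_diff)
  also have "\<dots> = 1" using e by simp
  finally show ?thesis .
qed

lemma Xt_meas[measurable (raw)]:
  assumes [measurable]: "g \<in> borel_measurable N" "h \<in> measurable N M"
  shows "(\<lambda>z. X (max 0 (g z)) (h z)) \<in> borel_measurable N"
proof -
  have "(\<lambda>z. (max 0 (g z), h z)) \<in> measurable N (restrict_space lborel {0..} \<Otimes>\<^sub>M M)"
  proof (rule measurable_Pair)
    show "(\<lambda>z. max 0 (g z)) \<in> measurable N (restrict_space lborel {0..})"
      by (rule measurable_restrict_space2) auto
  qed simp
  from measurable_compose[OF this meas] show ?thesis by simp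
qed

end


context psetting
begin

definition Dt :: "'n \<Rightarrow> real \<Rightarrow> real" where "Dt i s = indicator {0..t} s * D i s"
definition Mst :: "real \<Rightarrow> 'a \<Rightarrow> real" where
  "Mst s \<omega> = exp (lam * X (max 0 s) \<omega> - lam\<^sup>2 * R (max 0 s) (max 0 s) / 2)"

lemma Dt_meas[measurable]: "Dt i \<in> borel_measurable borel"
  unfolding Dt_def[abs_def] by (rule Dind_meas)

lemma Dt_int: "integrable lborel (Dt i)"
  unfolding Dt_def[abs_def] by (rule Dind_int)

lemma Rd_meas[measurable]: "(\<lambda>s. R (max 0 s) (max 0 s)) \<in> borel_measurable borel"
proof -
  have "continuous_on UNIV (\<lambda>s. R (max 0 s) (max 0 s))"
    by (rule continuous_on_compose2[OF R_contd, where f="\<lambda>s. max 0 s"]) (auto intro!: continuous_intros)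
  then show ?thesis by (rule borel_measurable_continuous_onI)
qed

lemma Mst_meas[measurable (raw)]:
  assumes [measurable]: "g \<in> borel_measurable N" "h \<in> measurable N M"
  shows "(\<lambda>z. Mst (g z) (h z)) \<in> borel_measurable N"
  unfolding Mst_def by measurable

lemma Mst_eq: "0 \<le> s \<Longrightarrow> Mst s \<omega> = Ms s \<omega>"
  unfolding Mst_def Ms_def by simp

lemma Mst_nn: "0 \<le> Mst s \<omega>" unfolding Mst_def by simp

lemma Dt_zero: "s \<notin> {0..t} \<Longrightarrow> Dt i s = 0" unfolding Dt_def by simp

interpretation P: pair_sigma_finite lborel M ..

lemma Dt_prod_int: "integrable (lborel \<Otimes>\<^sub>M M) (\<lambda>p. Dt i (fst p))"
proof (rule P.Fubini_integrable)
  show "(\<lambda>p. Dt i (fst p)) \<in> borel_measurable (lborel \<Otimes>\<^sub>M M)" by measurable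
  have "(\<lambda>s. \<integral>\<omega>. norm (Dt i (fst (s, \<omega>))) \<partial>M) = (\<lambda>s. \<bar>Dt i s\<bar>)" by (simp add: prob_space)
  then show "integrable lborel (\<lambda>s. \<integral>\<omega>. norm (Dt i (fst (s, \<omega>))) \<partial>M)"
    using integrable_abs[OF Dt_int] by simp
  show "AE s in lborel. integrable M (\<lambda>\<omega>. Dt i (fst (s, \<omega>)))" by simp
qed

lemma G_prod_int: "integrable (lborel \<Otimes>\<^sub>M M) (\<lambda>p. Mst (fst p) (snd p) * Dt i (fst p))"
proof (rule P.Fubini_integrable)
  show "(\<lambda>p. Mst (fst p) (snd p) * Dt i (fst p)) \<in> borel_measurable (lborel \<Otimes>\<^sub>M M)" by measurable
  have eq: "(\<integral>\<omega>. norm (Mst (fst (s, \<omega>)) (snd (s, \<omega>)) * Dt i (fst (s, \<omega>))) \<partial>M) = \<bar>Dt i s\<bar>" for s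
  proof (cases "s \<in> {0..t}")
    case True
    then have s: "0 \<le> s" by simp
    have "(\<integral>\<omega>. norm (Mst (fst (s, \<omega>)) (snd (s, \<omega>)) * Dt i (fst (s, \<omega>))) \<partial>M) = (\<integral>\<omega>. Ms s \<omega> * \<bar>Dt i s\<bar> \<partial>M)"
      by (intro Bochner_Integration.integral_cong refl) (simp add: Mst_eq[OF s] abs_mult Ms_nn)
    also have "\<dots> = \<bar>Dt i s\<bar>" using Ms_E[OF s] by simp
    finally show ?thesis .
  next
    case False then show ?thesis by (simp add: Dt_zero)
  qed
  show "integrable lborel (\<lambda>s. \<integral>\<omega>. norm (Mst (fst (s, \<omega>)) (snd (s, \<omega>)) * Dt i (fst (s, \<omega>))) \<partial>M)"
    unfolding eq using integrable_abs[OF Dt_int] by simp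
  show "AE s in lborel. integrable M (\<lambda>\<omega>. Mst (fst (s, \<omega>)) (snd (s, \<omega>)) * Dt i (fst (s, \<omega>)))"
  proof (intro AE_I2)
    fix s
    show "integrable M (\<lambda>\<omega>. Mst (fst (s, \<omega>)) (snd (s, \<omega>)) * Dt i (fst (s, \<omega>)))"
    proof (cases "s \<in> {0..t}")
      case True
      then have s: "0 \<le> s" by simp
      have "integrable M (\<lambda>\<omega>. Ms s \<omega> * Dt i s)" using Ms_int[OF s] by (rule integrable_mult_left)
      then show ?thesis by (simp add: Mst_eq[OF s])
    next
      case False then show ?thesis by (simp add: Dt_zero)
    qed
  qed
qed

end


context psetting
begin

interpretation P: pair_sigma_finite lborel M ..

lemma main_eq:
  "(\<integral>\<omega>. f (Y \<omega>) * ((Ms t \<omega> - 1) / lam) \<partial>M)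
     = (\<integral>\<omega>. (\<Sum>i\<in>UNIV. pd i f (Y \<omega>) * (LINT s:{0..t}|lborel. Ms s \<omega> * D i s)) \<partial>M)"
proof -
  obtain Bf where Bf: "\<And>x. \<bar>f x\<bar> \<le> Bf" using f_bdd by blast
  obtain B where B: "\<And>i x. \<bar>pd i f x\<bar> \<le> B" using pd_bdd by blast
  have t0: "0 \<le> t" using t by simp
  define F1 where "F1 s \<omega> = (\<Sum>i\<in>UNIV. pd i f (Y \<omega> + lam *\<^sub>R rr s) * Dt i s)" for s \<omega>
  define G where "G i s \<omega> = Mst s \<omega> * Dt i s" for i s \<omega>
  define F2 where "F2 s \<omega> = (\<Sum>i\<in>UNIV. pd i f (Y \<omega>) * G i s \<omega>)" for s \<omega>
  have lam0: "lam \<noteq> 0" using lam by simp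
  have iF: "integrable M (\<lambda>\<omega>. f (Y \<omega>))"
    by (rule integrable_const_bound[where B=Bf]) (auto intro: Bf)
  have iFs: "integrable M (\<lambda>\<omega>. f (Y \<omega> + lam *\<^sub>R rr t))"
    by (rule integrable_const_bound[where B=Bf]) (auto intro: Bf)
  have iFM: "integrable M (\<lambda>\<omega>. f (Y \<omega>) * Ms t \<omega>)"
    by (rule integrable_bdd_mult[OF Ms_int[OF t0] _ Bf]) measurable
  have "(\<integral>\<omega>. f (Y \<omega>) * ((Ms t \<omega> - 1) / lam) \<partial>M) = (\<integral>\<omega>. (f (Y \<omega>) * Ms t \<omega> - f (Y \<omega>)) / lam \<partial>M)"
    by (intro Bochner_Integration.integral_cong refl) (simp add: field_simps)
  also have "\<dots> = ((\<integral>\<omega>. f (Y \<omega>) * Ms t \<omega> \<partial>M) - (\<integral>\<omega>. f (Y \<omega>) \<partial>M)) / lam"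
    using iF iFM by simp
  also have "\<dots> = ((\<integral>\<omega>. f (Y \<omega> + lam *\<^sub>R rr t) \<partial>M) - (\<integral>\<omega>. f (Y \<omega>) \<partial>M)) / lam"
    by (simp add: CMX[OF t0 f_meas])
  also have "\<dots> = (\<integral>\<omega>. f (Y \<omega> + lam *\<^sub>R rr t) - f (Y \<omega>) \<partial>M) / lam"
    using iF iFs by simp
  also have "\<dots> = (\<integral>\<omega>. lam * (\<integral>s. F1 s \<omega> \<partial>lborel) \<partial>M) / lam"
  proof -
    have "f (Y \<omega> + lam *\<^sub>R rr t) - f (Y \<omega>) = lam * (\<integral>s. F1 s \<omega> \<partial>lborel)" for \<omega>
      unfolding FTC[of "Y \<omega>"] F1_def Dt_def Phi_ind ..
    then show ?thesis by simp
  qed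
  also have "\<dots> = (\<integral>\<omega>. (\<integral>s. F1 s \<omega> \<partial>lborel) \<partial>M)"
    using lam0 by simp
  finally have A: "(\<integral>\<omega>. f (Y \<omega>) * ((Ms t \<omega> - 1) / lam) \<partial>M) = (\<integral>\<omega>. (\<integral>s. F1 s \<omega> \<partial>lborel) \<partial>M)" .
  have iF1: "integrable (lborel \<Otimes>\<^sub>M M) (case_prod F1)"
  proof -
    have "integrable (lborel \<Otimes>\<^sub>M M) (\<lambda>p. \<Sum>i\<in>UNIV. pd i f (Y (snd p) + lam *\<^sub>R rr (fst p)) * Dt i (fst p))"
      by (intro Bochner_Integration.integrable_sum integrable_bdd_mult[OF Dt_prod_int _ B]) measurable
    then show ?thesis by (simp add: F1_def split_beta')
  qed
  have C: "(\<integral>\<omega>. (\<integral>s. F1 s \<omega> \<partial>lborel) \<partial>M) = (\<integral>s. (\<integral>\<omega>. F1 s \<omega> \<partial>M) \<partial>lborel)"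
    by (rule P.Fubini_integral[OF iF1])
  have D: "(\<integral>\<omega>. F1 s \<omega> \<partial>M) = (\<integral>\<omega>. F2 s \<omega> \<partial>M)" for s
  proof (cases "s \<in> {0..t}")
    case False
    then show ?thesis by (simp add: F1_def F2_def G_def Dt_zero)
  next
    case True
    then have s: "0 \<le> s" by simp
    have ip1: "integrable M (\<lambda>\<omega>. pd i f (Y \<omega> + lam *\<^sub>R rr s))" for i
      by (rule integrable_const_bound[where B=B]) (auto intro: B)
    have ip2: "integrable M (\<lambda>\<omega>. pd i f (Y \<omega>) * Ms s \<omega>)" for i
      by (rule integrable_bdd_mult[OF Ms_int[OF s] _ B]) measurable
    have "(\<integral>\<omega>. F1 s \<omega> \<partial>M) = (\<Sum>i\<in>UNIV. (\<integral>\<omega>. pd i f (Y \<omega> + lam *\<^sub>R rr s) \<partial>M) * Dt i s)"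
      unfolding F1_def using ip1 by (simp add: Bochner_Integration.integral_sum)
    also have "\<dots> = (\<Sum>i\<in>UNIV. (\<integral>\<omega>. pd i f (Y \<omega>) * Ms s \<omega> \<partial>M) * Dt i s)"
      by (simp add: CMX[OF s pd_meas])
    also have "\<dots> = (\<integral>\<omega>. F2 s \<omega> \<partial>M)"
    proof -
      have "F2 s \<omega> = (\<Sum>i\<in>UNIV. pd i f (Y \<omega>) * Ms s \<omega> * Dt i s)" for \<omega>
        unfolding F2_def G_def by (simp add: Mst_eq[OF s] mult_ac)
      then show ?thesis using ip2 by (simp add: Bochner_Integration.integral_sum)
    qed
    finally show ?thesis .
  qed
  have iF2: "integrable (lborel \<Otimes>\<^sub>M M) (case_prod F2)"
  proof -
    have "integrable (lborel \<Otimes>\<^sub>M M) (\<lambda>p. \<Sum>i\<in>UNIV. pd i f (Y (snd p)) * (Mst (fst p) (snd p) * Dt i (fst p)))"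
      by (intro Bochner_Integration.integrable_sum integrable_bdd_mult[OF G_prod_int _ B]) measurable
    then show ?thesis by (simp add: F2_def G_def split_beta')
  qed
  have E: "(\<integral>s. (\<integral>\<omega>. F2 s \<omega> \<partial>M) \<partial>lborel) = (\<integral>\<omega>. (\<integral>s. F2 s \<omega> \<partial>lborel) \<partial>M)"
    by (rule P.Fubini_integral[OF iF2, symmetric])
  have iG: "integrable (lborel \<Otimes>\<^sub>M M) (case_prod (G i))" for i
    using G_prod_int[of i] by (simp add: G_def split_beta')
  have AEG: "AE \<omega> in M. \<forall>i\<in>UNIV. integrable lborel (\<lambda>s. G i s \<omega>)"
    by (rule AE_finite_allI) (simp_all add: P.AE_integrable_snd[OF iG])
  have Gset: "(\<integral>s. G i s \<omega> \<partial>lborel) = (LINT s:{0..t}|lborel. Ms s \<omega> * D i s)" for i \<omega>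
    unfolding set_lebesgue_integral_def G_def Dt_def
    by (intro Bochner_Integration.integral_cong refl) (auto simp: Mst_eq split: split_indicator)
  have F: "(\<integral>\<omega>. (\<integral>s. F2 s \<omega> \<partial>lborel) \<partial>M) = (\<integral>\<omega>. (\<Sum>i\<in>UNIV. pd i f (Y \<omega>) * (\<integral>s. G i s \<omega> \<partial>lborel)) \<partial>M)"
  proof (rule integral_cong_AE)
    have [measurable]: "case_prod (\<lambda>\<omega> s. F2 s \<omega>) \<in> borel_measurable (M \<Otimes>\<^sub>M lborel)"
      unfolding F2_def G_def Dt_def[abs_def] by measurable
    show "(\<lambda>\<omega>. \<integral>s. F2 s \<omega> \<partial>lborel) \<in> borel_measurable M"
      by (rule lborel.borel_measurable_lebesgue_integral) measurable
    have [measurable]: "case_prod (\<lambda>\<omega> s. G i s \<omega>) \<in> borel_measurable (M \<Otimes>\<^sub>M lborel)" for i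
      unfolding G_def Dt_def[abs_def] by measurable
    have [measurable]: "(\<lambda>\<omega>. \<integral>s. G i s \<omega> \<partial>lborel) \<in> borel_measurable M" for i
      by (rule lborel.borel_measurable_lebesgue_integral) measurable
    show "(\<lambda>\<omega>. \<Sum>i\<in>UNIV. pd i f (Y \<omega>) * (\<integral>s. G i s \<omega> \<partial>lborel)) \<in> borel_measurable M"
      by measurable
    show "AE \<omega> in M. (\<integral>s. F2 s \<omega> \<partial>lborel) = (\<Sum>i\<in>UNIV. pd i f (Y \<omega>) * (\<integral>s. G i s \<omega> \<partial>lborel))"
      using AEG
    proof eventually_elim
      case (elim \<omega>)
      then show ?case unfolding F2_def by (simp add: Bochner_Integration.integral_sum)
    qed
  qed
  show ?thesis
    unfolding A C D E F Gset ..
qed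

end

theorem proposition2p1:
  fixes M :: "'a measure" and X :: "real \<Rightarrow> 'a \<Rightarrow> real" and R :: "real \<Rightarrow> real \<Rightarrow> real"
    and lam :: real and t :: real
    and ts :: "'n::finite \<Rightarrow> real" and f :: "real^'n \<Rightarrow> real"
  assumes "prob_space M"
    and gauss: "centered_gaussian_process M {0..} X"
    and meas: "(\<lambda>(s, \<omega>). X s \<omega>) \<in> borel_measurable (restrict_space lborel {0..} \<Otimes>\<^sub>M M)"
    and X0: "\<forall>\<omega>\<in>space M. X 0 \<omega> = 0"
    and R_def: "\<forall>s\<ge>0. \<forall>t\<ge>0. R s t = (\<integral>\<omega>. X s \<omega> * X t \<omega> \<partial>M)"
    and R_cont: "continuous_on ({0..} \<times> {0..}) (\<lambda>(s, t). R s t)"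
    and R_diff: "\<forall>s t. s > 0 \<longrightarrow> t > 0 \<longrightarrow> s \<noteq> t \<longrightarrow> (\<lambda>s'. R s' t) differentiable (at s)"
    and R_bound: "\<forall>T>0. \<exists>C::real. \<forall>u\<in>{0..T}.
                    (\<integral>\<^sup>+ s\<in>{0..T}. ennreal \<bar>deriv (\<lambda>s'. R s' u) s\<bar> \<partial>lborel) \<le> ennreal C"
    and lam: "lam > 0"
    and t: "t > 0"
    and ts: "\<forall>i. ts i > 0"
    and f: "Cb_inf f"
  shows "(\<integral>\<omega>. f (\<chi> i. X (ts i) \<omega>) * ((exp (lam * X t \<omega> - lam\<^sup>2 * R t t / 2) - 1) / lam) \<partial>M)
       = (\<integral>\<omega>. (\<Sum>i\<in>UNIV. pd i f (\<chi> j. X (ts j) \<omega>) *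
              (LINT s:{0..t}|lborel. exp (lam * X s \<omega> - lam\<^sup>2 * R s s / 2) * deriv (\<lambda>s'. R s' (ts i)) s)) \<partial>M)"
  proof -
  interpret P: psetting M X R lam t ts f
    by (rule psetting.intro; fact)
  show ?thesis
    using P.main_eq unfolding P.Y_def P.Ms_def P.D_def .
qed

end
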